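(* Let $F(\xi,\eta,\zeta)$ be a homogeneous polynomial of degree $n\geq2$ defining a smooth plane curve $C\subset\mathbb{C}P_2$, and let $m\geq 0$. Let $S_m$ denote the space of homogeneous polynomials of degree $m$ in $x,y,z$ satisfying $F(\partial_x,\partial_y,\partial_z)\phi=0$. Then $\dim S_m=r_m$, where $r_m=mn+1-\tfrac12(n-1)(n-2)$ if $m\geq n$ and $r_m=\binom{m+2}{2}$ if $m<n$; moreover there exist points $[\xi_i:\eta_i:\zeta_i]\in C$, $1\le i\le r_m$, such that the polynomials $(\xi_i x+\eta_i y+\zeta_i z)^m$, $1\le i\le r_m$, form a basis of $S_m$. *)

theory Defs
  imports Complex_Main "HOL-Library.Function_Algebras"
begin

text \<open>Polynomials in the three variables x, y, z over the complex numbers are represented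
  by their coefficient functions: p (a,b,c) is the coefficient of x^a y^b z^c.
  (Only finitely supported functions are polynomials; all polynomials used here are
  homogeneous of a fixed degree, hence finitely supported.)\<close>

type_synonym poly3 = "nat \<times> nat \<times> nat \<Rightarrow> complex"

definition monoms :: "nat \<Rightarrow> (nat \<times> nat \<times> nat) set" where
  "monoms d = {(a,b,c). a + b + c = d}"

definition homog :: "nat \<Rightarrow> poly3 \<Rightarrow> bool" where
  "homog d p \<longleftrightarrow> (\<forall>a b c. p (a,b,c) \<noteq> 0 \<longrightarrow> a + b + c = d)"

definition eval3 :: "nat \<Rightarrow> poly3 \<Rightarrow> complex \<Rightarrow> complex \<Rightarrow> complex \<Rightarrow> complex" where
  "eval3 d p x y z = (\<Sum>(a,b,c)\<in>monoms d. p (a,b,c) * x ^ a * y ^ b * z ^ c)"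

definition pdx :: "poly3 \<Rightarrow> poly3" where
  "pdx p = (\<lambda>(a,b,c). of_nat (a+1) * p (a+1,b,c))"
definition pdy :: "poly3 \<Rightarrow> poly3" where
  "pdy p = (\<lambda>(a,b,c). of_nat (b+1) * p (a,b+1,c))"
definition pdz :: "poly3 \<Rightarrow> poly3" where
  "pdz p = (\<lambda>(a,b,c). of_nat (c+1) * p (a,b,c+1))"

definition smooth_curve_poly :: "nat \<Rightarrow> poly3 \<Rightarrow> bool" where
  "smooth_curve_poly n F \<longleftrightarrow> homog n F \<and> F \<noteq> (\<lambda>_. 0) \<and>
     (\<forall>x y z. (x,y,z) \<noteq> (0,0,0) \<longrightarrow>
        \<not> (eval3 n F x y z = 0 \<and> eval3 (n-1) (pdx F) x y z = 0 \<and>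
           eval3 (n-1) (pdy F) x y z = 0 \<and> eval3 (n-1) (pdz F) x y z = 0))"

definition diffop :: "nat \<Rightarrow> poly3 \<Rightarrow> poly3 \<Rightarrow> poly3" where
  "diffop n F phi = (\<lambda>t. \<Sum>(a,b,c)\<in>monoms n.
      F (a,b,c) * ((pdx ^^ a) ((pdy ^^ b) ((pdz ^^ c) phi))) t)"

definition S_space :: "nat \<Rightarrow> poly3 \<Rightarrow> nat \<Rightarrow> poly3 set" where
  "S_space n F m = {phi. homog m phi \<and> diffop n F phi = (\<lambda>_. 0)}"

definition pmult :: "poly3 \<Rightarrow> poly3 \<Rightarrow> poly3" where
  "pmult p q = (\<lambda>(i,j,k). \<Sum>a\<le>i. \<Sum>b\<le>j. \<Sum>c\<le>k. p (a,b,c) * q (i-a, j-b, k-c))"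

definition pone :: poly3 where
  "pone = (\<lambda>t. if t = (0,0,0) then 1 else 0)"

definition linform :: "complex \<Rightarrow> complex \<Rightarrow> complex \<Rightarrow> poly3" where
  "linform \<xi> \<eta> \<zeta> = (\<lambda>t. if t = (1,0,0) then \<xi> else if t = (0,1,0) then \<eta>
                         else if t = (0,0,1) then \<zeta> else 0)"

definition ppow :: "poly3 \<Rightarrow> nat \<Rightarrow> poly3" where
  "ppow p m = (pmult p ^^ m) pone"

definition cscale :: "complex \<Rightarrow> poly3 \<Rightarrow> poly3" where
  "cscale c f = (\<lambda>t. c * f t)"

lemma vector_space_cscale: "vector_space cscale"
  by unfold_locales (auto simp: cscale_def algebra_simps)

definition r_num :: "nat \<Rightarrow> nat \<Rightarrow> nat" where
  "r_num n m = (if m \<ge> n then m * n + 1 - ((n - 1) * (n - 2)) div 2 else (m + 2) choose 2)"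

end

theory Submission
  imports Defs "Subresultants.Subresultant_Gcd" "HOL-Computational_Algebra.Computational_Algebra" "HOL-Computational_Algebra.Field_as_Ring"
begin


lemma monoms_finite[simp]: "finite (monoms d)"
proof -
  have "monoms d \<subseteq> {..d} \<times> {..d} \<times> {..d}" by (auto simp: monoms_def)
  thus ?thesis by (rule finite_subset) auto
qed

lemma in_monoms[simp]: "(a,b,c) \<in> monoms d \<longleftrightarrow> a+b+c = d" by (simp add: monoms_def)

lemma linform_alt: "linform \<xi> \<eta> \<zeta> = (\<lambda>t. (if t=(1,0,0) then \<xi> else 0) + (if t=(0,1,0) then \<eta> else 0) + (if t=(0,0,1) then \<zeta> else 0))"
  by (auto simp: linform_def fun_eq_iff)

lemma sum_single:
  fixes a0 i :: nat
  assumes "\<And>a. a \<noteq> a0 \<Longrightarrow> f a = (0::'b::comm_monoid_add)"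
  shows "(\<Sum>a\<le>i. f a) = (if a0 \<le> i then f a0 else 0)"
proof (cases "a0 \<le> i")
  case True
  have "(\<Sum>a\<le>i. f a) = f a0 + (\<Sum>a\<in>{..i}-{a0}. f a)"
    using True by (subst sum.remove[of _ a0]) (auto simp: finite_atMost)
  also have "(\<Sum>a\<in>{..i}-{a0}. f a) = 0" using assms by (intro sum.neutral) auto
  finally show ?thesis using True by simp
next
  case False
  then show ?thesis using assms by (intro trans[OF sum.neutral]) auto
qed

lemma sum3_delta:
  fixes P :: "nat \<Rightarrow> nat \<Rightarrow> nat \<Rightarrow> complex"
  shows "(\<Sum>a\<le>i. \<Sum>b\<le>j. \<Sum>c\<le>k. (if (a,b,c) = (a0,b0,c0) then v else 0) * P a b c) =
     (if a0 \<le> i \<and> b0 \<le> j \<and> c0 \<le> k then v * P a0 b0 c0 else 0)"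
proof -
  have i: "(\<Sum>c\<le>k. (if (a,b,c) = (a0,b0,c0) then v else 0) * P a b c) =
     (if a = a0 \<and> b = b0 \<and> c0 \<le> k then v * P a b c0 else 0)" for a b
    by (subst sum_single[of c0]) auto
  have j: "(\<Sum>b\<le>j. (if a = a0 \<and> b = b0 \<and> c0 \<le> k then v * P a b c0 else 0)) =
     (if a = a0 \<and> b0 \<le> j \<and> c0 \<le> k then v * P a b0 c0 else 0)" for a
    by (subst sum_single[of b0]) auto
  show ?thesis unfolding i j
    by (subst sum_single[of a0]) auto
qed

lemma pmult_linform: "pmult (linform \<xi> \<eta> \<zeta>) P (i,j,k) =
   (if i > 0 then \<xi> * P (i-1,j,k) else 0) + (if j > 0 then \<eta> * P (i,j-1,k) else 0)
   + (if k > 0 then \<zeta> * P (i,j,k-1) else 0)"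
proof -
  let ?Q = "\<lambda>a b c. P (i-a,j-b,k-c)"
  have e: "linform \<xi> \<eta> \<zeta> (a,b,c) * ?Q a b c = (if (a,b,c) = (1,0,0) then \<xi> else 0) * ?Q a b c
     + (if (a,b,c) = (0,1,0) then \<eta> else 0) * ?Q a b c + (if (a,b,c) = (0,0,1) then \<zeta> else 0) * ?Q a b c" for a b c
    by (simp add: linform_def)
  have "pmult (linform \<xi> \<eta> \<zeta>) P (i,j,k) =
    (\<Sum>a\<le>i. \<Sum>b\<le>j. \<Sum>c\<le>k. (if (a,b,c) = (1,0,0) then \<xi> else 0) * ?Q a b c) +
    (\<Sum>a\<le>i. \<Sum>b\<le>j. \<Sum>c\<le>k. (if (a,b,c) = (0,1,0) then \<eta> else 0) * ?Q a b c) +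
    (\<Sum>a\<le>i. \<Sum>b\<le>j. \<Sum>c\<le>k. (if (a,b,c) = (0,0,1) then \<zeta> else 0) * ?Q a b c)"
    unfolding pmult_def split e by (simp only: sum.distrib)
  also have "\<dots> = (if i > 0 then \<xi> * P (i-1,j,k) else 0) + (if j > 0 then \<eta> * P (i,j-1,k) else 0)
   + (if k > 0 then \<zeta> * P (i,j,k-1) else 0)"
    unfolding sum3_delta by auto
  finally show ?thesis .
qed

definition mcoef :: "nat \<Rightarrow> nat \<Rightarrow> nat \<Rightarrow> complex" where
  "mcoef a b c = fact (a+b+c) / (fact a * fact b * fact c)"

lemma mcoef_term_a: "a+b+c = Suc N \<Longrightarrow> (if a > 0 then mcoef (a-1) b c else 0) =
   of_nat a * fact N / (fact a * fact b * fact c)"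
proof (cases a)
  case (Suc a')
  assume "a+b+c = Suc N"
  hence N: "N = a'+b+c" using Suc by simp
  have "(of_nat a * fact N / (fact a * fact b * fact c) :: complex) = (of_nat (Suc a') * fact N) / (of_nat (Suc a') * (fact a' * fact b * fact c))"
    unfolding Suc fact_Suc by (simp add: algebra_simps)
  also have "\<dots> = fact N / (fact a' * fact b * fact c)" by (rule mult_divide_mult_cancel_left, rule of_nat_neq_0)
  finally show ?thesis using Suc N by (simp add: mcoef_def)
qed simp
lemma mcoef_term_b: "a+b+c = Suc N \<Longrightarrow> (if b > 0 then mcoef a (b-1) c else 0) =
   of_nat b * fact N / (fact a * fact b * fact c)"
proof (cases b)
  case (Suc b')
  assume "a+b+c = Suc N"
  hence N: "N = a+b'+c" using Suc by simp
  have "(of_nat b * fact N / (fact a * fact b * fact c) :: complex) = (of_nat (Suc b') * fact N) / (of_nat (Suc b') * (fact a * fact b' * fact c))"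
    unfolding Suc fact_Suc by (simp add: algebra_simps)
  also have "\<dots> = fact N / (fact a * fact b' * fact c)" by (rule mult_divide_mult_cancel_left, rule of_nat_neq_0)
  finally show ?thesis using Suc N by (simp add: mcoef_def)
qed simp
lemma mcoef_term_c: "a+b+c = Suc N \<Longrightarrow> (if c > 0 then mcoef a b (c-1) else 0) =
   of_nat c * fact N / (fact a * fact b * fact c)"
proof (cases c)
  case (Suc c')
  assume "a+b+c = Suc N"
  hence N: "N = a+b+c'" using Suc by simp
  have "(of_nat c * fact N / (fact a * fact b * fact c) :: complex) = (of_nat (Suc c') * fact N) / (of_nat (Suc c') * (fact a * fact b * fact c'))"
    unfolding Suc fact_Suc by (simp add: algebra_simps)
  also have "\<dots> = fact N / (fact a * fact b * fact c')" by (rule mult_divide_mult_cancel_left, rule of_nat_neq_0)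
  finally show ?thesis using Suc N by (simp add: mcoef_def)
qed simp

lemma mcoef_rec: "a+b+c = Suc N \<Longrightarrow> mcoef a b c =
   (if a > 0 then mcoef (a-1) b c else 0) + (if b > 0 then mcoef a (b-1) c else 0) + (if c > 0 then mcoef a b (c-1) else 0)"
proof -
  assume h: "a+b+c = Suc N"
  have "(of_nat a * fact N / (fact a * fact b * fact c) + of_nat b * fact N / (fact a * fact b * fact c) + of_nat c * fact N / (fact a * fact b * fact c) :: complex)
    = of_nat (a+b+c) * fact N / (fact a * fact b * fact c)" by (simp add: add_divide_distrib algebra_simps)
  also have "\<dots> = fact (a+b+c) / (fact a * fact b * fact c)" unfolding h fact_Suc by simp
  finally show ?thesis using h by (simp only: mcoef_term_a mcoef_term_b mcoef_term_c) (simp add: mcoef_def)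
qed

lemma mcoef_0[simp]: "mcoef 0 0 0 = 1" by (simp add: mcoef_def)

lemma ppow_Suc: "ppow p (Suc m) = pmult p (ppow p m)" by (simp add: ppow_def)

lemma ppow_linform: "ppow (linform \<xi> \<eta> \<zeta>) m (a,b,c) =
   (if a+b+c = m then mcoef a b c * \<xi>^a * \<eta>^b * \<zeta>^c else 0)"
proof (induction m arbitrary: a b c)
  case 0
  then show ?case by (simp add: ppow_def pone_def)
next
  case (Suc m)
  let ?L = "linform \<xi> \<eta> \<zeta>"
  have e: "ppow ?L (Suc m) (a,b,c) = (if a > 0 then \<xi> * ppow ?L m (a-1,b,c) else 0) + (if b > 0 then \<eta> * ppow ?L m (a,b-1,c) else 0)
   + (if c > 0 then \<zeta> * ppow ?L m (a,b,c-1) else 0)"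
    by (simp only: ppow_Suc pmult_linform)
  show ?case
  proof (cases "a+b+c = Suc m")
    case False
    have "(if a > 0 then \<xi> * ppow ?L m (a-1,b,c) else 0) = 0" using False by (cases a) (auto simp: Suc.IH)
    moreover have "(if b > 0 then \<eta> * ppow ?L m (a,b-1,c) else 0) = 0" using False by (cases b) (auto simp: Suc.IH)
    moreover have "(if c > 0 then \<zeta> * ppow ?L m (a,b,c-1) else 0) = 0" using False by (cases c) (auto simp: Suc.IH)
    ultimately show ?thesis unfolding e using False by simp
  next
    case True
    have "ppow ?L (Suc m) (a,b,c) = ((if a > 0 then mcoef (a-1) b c else 0) + (if b > 0 then mcoef a (b-1) c else 0) + (if c > 0 then mcoef a b (c-1) else 0)) * \<xi>^a * \<eta>^b * \<zeta>^c"
    proof -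
      have t1: "(if a > 0 then \<xi> * ppow ?L m (a-1,b,c) else 0) = (if a > 0 then mcoef (a-1) b c else 0) * \<xi>^a * \<eta>^b * \<zeta>^c"
        using True by (cases a) (auto simp: Suc.IH)
      have t2: "(if b > 0 then \<eta> * ppow ?L m (a,b-1,c) else 0) = (if b > 0 then mcoef a (b-1) c else 0) * \<xi>^a * \<eta>^b * \<zeta>^c"
        using True by (cases b) (auto simp: Suc.IH)
      have t3: "(if c > 0 then \<zeta> * ppow ?L m (a,b,c-1) else 0) = (if c > 0 then mcoef a b (c-1) else 0) * \<xi>^a * \<eta>^b * \<zeta>^c"
        using True by (cases c) (auto simp: Suc.IH)
      show ?thesis unfolding e t1 t2 t3 by (simp add: algebra_simps)
    qed
    also have "\<dots> = mcoef a b c * \<xi>^a * \<eta>^b * \<zeta>^c"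
      using mcoef_rec[OF True] by simp
    finally show ?thesis using True by simp
  qed
qed

definition ffr :: "nat \<Rightarrow> nat \<Rightarrow> complex" where "ffr i a = fact (i+a) / fact i"

lemma ffr_Suc: "of_nat (Suc i) * ffr (Suc i) a = ffr i (Suc a)"
  by (simp add: ffr_def field_simps del: of_nat_Suc)

lemma ffr_nz: "ffr i a \<noteq> 0" by (simp add: ffr_def)

lemma pdx_pow: "(pdx ^^ a) p (i,j,k) = ffr i a * p (i+a,j,k)"
proof (induction a arbitrary: i)
  case 0 then show ?case by (simp add: ffr_def)
next
  case (Suc a)
  have "(pdx ^^ Suc a) p (i,j,k) = of_nat (Suc i) * ((pdx ^^ a) p (Suc i,j,k))"
    by (simp add: pdx_def)
  also have "\<dots> = of_nat (Suc i) * ffr (Suc i) a * p (i + Suc a, j, k)" by (simp add: Suc.IH)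
  finally show ?case using ffr_Suc[of i a] by simp
qed

lemma pdy_pow: "(pdy ^^ b) p (i,j,k) = ffr j b * p (i,j+b,k)"
proof (induction b arbitrary: j)
  case 0 then show ?case by (simp add: ffr_def)
next
  case (Suc b)
  have "(pdy ^^ Suc b) p (i,j,k) = of_nat (Suc j) * ((pdy ^^ b) p (i,Suc j,k))"
    by (simp add: pdy_def)
  also have "\<dots> = of_nat (Suc j) * ffr (Suc j) b * p (i, j + Suc b, k)" by (simp add: Suc.IH)
  finally show ?case using ffr_Suc[of j b] by simp
qed

lemma pdz_pow: "(pdz ^^ c) p (i,j,k) = ffr k c * p (i,j,k+c)"
proof (induction c arbitrary: k)
  case 0 then show ?case by (simp add: ffr_def)
next
  case (Suc c)
  have "(pdz ^^ Suc c) p (i,j,k) = of_nat (Suc k) * ((pdz ^^ c) p (i,j,Suc k))"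
    by (simp add: pdz_def)
  also have "\<dots> = of_nat (Suc k) * ffr (Suc k) c * p (i, j, k + Suc c)" by (simp add: Suc.IH)
  finally show ?case using ffr_Suc[of k c] by simp
qed

lemma diffop_eq: "diffop n F phi (i,j,k) = (\<Sum>(a,b,c)\<in>monoms n. F (a,b,c) * ffr i a * ffr j b * ffr k c * phi (i+a,j+b,k+c))"
  unfolding diffop_def by (intro sum.cong refl) (auto simp: pdx_pow pdy_pow pdz_pow)

lemma eval3_alt: "eval3 d p x y z = (\<Sum>(a,b,c)\<in>monoms d. p (a,b,c) * x ^ a * y ^ b * z ^ c)"
  by (simp add: eval3_def)

lemma ppow_in_S:
  assumes "eval3 n F \<xi> \<eta> \<zeta> = 0"
  shows "diffop n F (ppow (linform \<xi> \<eta> \<zeta>) m) = (\<lambda>_. 0)"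
proof
  fix t :: "nat \<times> nat \<times> nat"
  obtain i j k where t: "t = (i,j,k)" by (cases t) auto
  let ?K = "fact m / (fact i * fact j * fact k) * \<xi>^i * \<eta>^j * \<zeta>^k"
  have "diffop n F (ppow (linform \<xi> \<eta> \<zeta>) m) (i,j,k) =
     (\<Sum>(a,b,c)\<in>monoms n. (if i+j+k+n = m then ?K else 0) * (F (a,b,c) * \<xi>^a * \<eta>^b * \<zeta>^c))"
    unfolding diffop_eq
  proof (intro sum.cong refl, clarify)
    fix a b c assume "(a,b,c) \<in> monoms n"
    hence abc: "a+b+c = n" by simp
    show "F (a, b, c) * ffr i a * ffr j b * ffr k c * ppow (linform \<xi> \<eta> \<zeta>) m (i + a, j + b, k + c) =
         (if i + j + k + n = m then ?K else 0) * (F (a, b, c) * \<xi> ^ a * \<eta> ^ b * \<zeta> ^ c)"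
    proof (cases "i+j+k+n = m")
      case True
      have m: "i+a+(j+b)+(k+c) = m" using True abc by simp
      hence e: "ffr i a * ffr j b * ffr k c * mcoef (i+a) (j+b) (k+c) = fact m / (fact i * fact j * fact k)"
        by (simp add: ffr_def mcoef_def field_simps)
      let ?P1 = "\<xi>^i*\<eta>^j*\<zeta>^k" and ?P2 = "\<xi>^a*\<eta>^b*\<zeta>^c"
      have pp: "ppow (linform \<xi> \<eta> \<zeta>) m (i+a,j+b,k+c) = mcoef (i+a) (j+b) (k+c) * ?P1 * ?P2"
        using m by (simp add: ppow_linform power_add algebra_simps)
      have "F (a, b, c) * ffr i a * ffr j b * ffr k c * ppow (linform \<xi> \<eta> \<zeta>) m (i + a, j + b, k + c)
          = F (a,b,c) * ?P1 * ?P2 * (ffr i a * ffr j b * ffr k c * mcoef (i+a) (j+b) (k+c))"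
        unfolding pp by (simp add: algebra_simps)
      also have "\<dots> = F (a,b,c) * ?P1 * ?P2 * (fact m / (fact i * fact j * fact k))" unfolding e ..
      finally show ?thesis using True by (simp add: algebra_simps)
    next
      case False
      then show ?thesis using abc by (simp add: ppow_linform)
    qed
  qed
  also have "\<dots> = (if i+j+k+n = m then ?K else 0) * eval3 n F \<xi> \<eta> \<zeta>"
    unfolding eval3_def sum_distrib_left by (intro sum.cong refl) auto
  finally show "diffop n F (ppow (linform \<xi> \<eta> \<zeta>) m) t = 0" using assms t by simp
qed

interpretation cs: vector_space cscale by (rule vector_space_cscale)

lemma sum_fun: "(\<Sum>i\<in>A. f i) x = (\<Sum>i\<in>A. f i x)"
  by (induction A rule: infinite_finite_induct) auto

definition supp_in :: "(nat\<times>nat\<times>nat) set \<Rightarrow> poly3 \<Rightarrow> bool" where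
  "supp_in E f \<longleftrightarrow> (\<forall>t. t \<notin> E \<longrightarrow> f t = 0)"

definition delta :: "nat\<times>nat\<times>nat \<Rightarrow> poly3" where "delta t0 = (\<lambda>t. if t = t0 then 1 else 0)"

lemma supp_in_span:
  assumes "finite E" "supp_in E f"
  shows "f \<in> cs.span (delta ` E)"
proof -
  have "f = (\<Sum>t\<in>E. cscale (f t) (delta t))"
  proof
    fix x
    have "(\<Sum>t\<in>E. cscale (f t) (delta t)) x = (\<Sum>t\<in>E. f t * delta t x)"
      by (simp add: sum_fun cscale_def)
    also have "\<dots> = (\<Sum>t\<in>E. if t = x then f t else 0)"
      by (rule sum.cong) (auto simp: delta_def)
    also have "\<dots> = f x"
    proof (cases "x \<in> E")
      case False
      hence "f x = 0" using assms(2) unfolding supp_in_def by blast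
      thus ?thesis using False assms(1) by simp
    qed (use assms in simp)
    finally show "f x = (\<Sum>t\<in>E. cscale (f t) (delta t)) x" by simp
  qed
  also have "\<dots> \<in> cs.span (delta ` E)"
    by (intro cs.span_sum cs.span_scale cs.span_base) auto
  finally show ?thesis .
qed

lemma dim_supp_le:
  assumes "finite E" "V \<subseteq> {f. supp_in E f}"
  shows "cs.dim V \<le> card E"
proof -
  have "cs.dim V \<le> card (delta ` E)"
    using assms supp_in_span by (intro cs.dim_le_card) auto
  also have "\<dots> \<le> card E" by (rule card_image_le) fact
  finally show ?thesis .
qed

lemma lin_sum:
  assumes V: "cs.subspace V" and add: "\<forall>x\<in>V. \<forall>y\<in>V. h (x+y) = h x + h y"
    and sc: "\<forall>x\<in>V. \<forall>c. h (cscale c x) = cscale c (h x)"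
    and B: "finite B" "B \<subseteq> V"
  shows "h (\<Sum>v\<in>B. cscale (u v) v) = (\<Sum>v\<in>B. cscale (u v) (h v))"
  using B
proof (induction B rule: finite_induct)
  case empty
  have "h 0 = h (0 + 0)" by simp
  also have "\<dots> = h 0 + h 0" using add V cs.subspace_0 by blast
  finally have "h 0 = 0" by simp
  then show ?case by (simp only: sum.empty)
next
  case (insert x F)
  have a: "(\<Sum>v\<in>F. cscale (u v) v) \<in> V"
  proof (rule cs.subspace_sum[OF V])
    fix y assume "y \<in> F" hence "y \<in> V" using insert by blast
    thus "cscale (u y) y \<in> V" by (rule cs.subspace_scale[OF V])
  qed
  have b: "cscale (u x) x \<in> V" using insert by (intro cs.subspace_scale[OF V]) blast
  have xV: "x \<in> V" using insert by auto
  have "h (\<Sum>v\<in>insert x F. cscale (u v) v) = h (cscale (u x) x + (\<Sum>v\<in>F. cscale (u v) v))"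
    by (subst sum.insert[OF insert(1,2)]) (rule refl)
  also have "\<dots> = h (cscale (u x) x) + h (\<Sum>v\<in>F. cscale (u v) v)" using add a b by blast
  also have "\<dots> = cscale (u x) (h x) + (\<Sum>v\<in>F. cscale (u v) (h v))"
    using sc xV insert by simp
  also have "\<dots> = (\<Sum>v\<in>insert x F. cscale (u v) (h v))" by (subst sum.insert[OF insert(1,2)]) (rule refl)
  finally show ?case .
qed

lemma dim_le_inj:
  assumes V: "cs.subspace V" "V \<subseteq> cs.span W" "finite W"
    and add: "\<forall>x\<in>V. \<forall>y\<in>V. h (x+y) = h x + h y"
    and sc: "\<forall>x\<in>V. \<forall>c. h (cscale c x) = cscale c (h x)"
    and inj: "inj_on h V" and im: "h ` V \<subseteq> {f. supp_in E f}" and E: "finite E"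
  shows "cs.dim V \<le> card E"
proof -
  obtain B where B: "B \<subseteq> V" "cs.independent B" "V \<subseteq> cs.span B" "card B = cs.dim V"
    using cs.basis_exists by blast
  have "B \<subseteq> cs.span W" using B V by blast
  hence fB: "finite B" using cs.independent_span_bound[OF V(3) B(2)] by blast
  have h0: "h 0 = 0"
  proof -
    have "h 0 = h (0 + 0)" by simp
    also have "\<dots> = h 0 + h 0" using add V cs.subspace_0 by blast
    finally show ?thesis by simp
  qed
  have ihB: "inj_on h B" using inj B(1) by (rule inj_on_subset)
  have ind: "cs.independent (h ` B)"
  proof
    assume "cs.dependent (h ` B)"
    moreover have "finite (h ` B)" using fB by simp
    ultimately have "\<exists>u. (\<exists>w\<in>h`B. u w \<noteq> 0) \<and> (\<Sum>w\<in>h`B. cscale (u w) w) = 0"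
      by (simp only: cs.dependent_finite)
    then obtain u where u: "\<exists>w\<in>h`B. u w \<noteq> 0" "(\<Sum>w\<in>h`B. cscale (u w) w) = 0"
      by blast
    have "(\<Sum>w\<in>h`B. cscale (u w) w) = (\<Sum>v\<in>B. cscale (u (h v)) (h v))"
      by (rule sum.reindex_cong[OF ihB refl refl])
    also have "\<dots> = h (\<Sum>v\<in>B. cscale (u (h v)) v)"
      by (rule lin_sum[OF V(1) add sc fB B(1), symmetric])
    finally have "h (\<Sum>v\<in>B. cscale (u (h v)) v) = h 0" using u h0 by simp
    moreover have "(\<Sum>v\<in>B. cscale (u (h v)) v) \<in> V"
    proof (rule cs.subspace_sum[OF V(1)])
      fix x assume "x \<in> B" hence "x \<in> V" using B(1) by blast
      thus "cscale (u (h x)) x \<in> V" by (rule cs.subspace_scale[OF V(1)])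
    qed
    moreover have "0 \<in> V" using V(1) by (rule cs.subspace_0)
    ultimately have z: "(\<Sum>v\<in>B. cscale (u (h v)) v) = 0"
      by (rule inj_onD[OF inj])
    have "\<forall>v\<in>B. u (h v) = 0"
    proof (rule ccontr)
      assume "\<not> (\<forall>v\<in>B. u (h v) = 0)"
      hence nz: "\<exists>v\<in>B. u (h v) \<noteq> 0" by blast
      have "\<exists>u'. (\<exists>v\<in>B. u' v \<noteq> 0) \<and> (\<Sum>v\<in>B. cscale (u' v) v) = 0"
        by (rule exI[of _ "\<lambda>v. u (h v)"]) (use z nz in blast)
      hence "cs.dependent B" by (simp only: cs.dependent_finite[OF fB])
      thus False using B(2) by simp
    qed
    thus False using u by blast
  qed
  have "card B = card (h ` B)" using card_image[OF ihB] by simp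
  also have "\<dots> \<le> card (delta ` E)"
  proof -
    have "h ` B \<subseteq> cs.span (delta ` E)" using E im B(1) supp_in_span by blast
    thus ?thesis using cs.independent_span_bound[OF _ ind, of "delta ` E"] E by blast
  qed
  also have "\<dots> \<le> card E" using E by (rule card_image_le)
  finally show ?thesis using B by simp
qed

lemma dim_ker_plus1:
  assumes V: "cs.subspace V" "V \<subseteq> cs.span W" "finite W"
    and add: "\<forall>x\<in>V. \<forall>y\<in>V. l (x+y) = l x + l y"
    and sc: "\<forall>x\<in>V. \<forall>c. l (cscale c x) = c * l x"
  shows "cs.dim V \<le> cs.dim {v\<in>V. l v = 0} + 1"
proof (cases "\<forall>v\<in>V. l v = 0")
  case True
  hence "{v\<in>V. l v = 0} = V" by auto
  thus ?thesis by simp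
next
  case False
  then obtain v0 where v0: "v0 \<in> V" "l v0 \<noteq> 0" by auto
  define K where "K = {v\<in>V. l v = 0}"
  obtain B where B: "B \<subseteq> K" "cs.independent B" "K \<subseteq> cs.span B" "card B = cs.dim K"
    using cs.basis_exists by blast
  have fB: "finite B" using cs.independent_span_bound[OF V(3) B(2)] B V K_def by auto
  have "V \<subseteq> cs.span (insert v0 B)"
  proof
    fix v assume v: "v \<in> V"
    define c where "c = l v / l v0"
    define w where "w = v + cscale (- c) v0"
    have wV: "w \<in> V" unfolding w_def using v v0 V by (intro cs.subspace_add cs.subspace_scale) auto
    have "cscale (- c) v0 \<in> V" using v0 V cs.subspace_scale by blast
    hence "l w = l v + l (cscale (- c) v0)" unfolding w_def using add v by blast
    also have "l (cscale (- c) v0) = (- c) * l v0" using sc v0 by blast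
    finally have "l w = l v + (- c) * l v0" .
    hence "l w = 0" using v0 by (simp add: c_def)
    hence "w \<in> cs.span B" using wV B K_def by auto
    hence "w \<in> cs.span (insert v0 B)" by (meson cs.span_mono subset_insertI subsetD)
    moreover have "cscale c v0 \<in> cs.span (insert v0 B)" by (intro cs.span_scale cs.span_base) auto
    ultimately have "w + cscale c v0 \<in> cs.span (insert v0 B)" by (rule cs.span_add)
    moreover have "w + cscale c v0 = v" unfolding w_def by (auto simp: cscale_def fun_eq_iff algebra_simps)
    ultimately show "v \<in> cs.span (insert v0 B)" by simp
  qed
  hence "cs.dim V \<le> card (insert v0 B)" using fB by (intro cs.dim_le_card) auto
  also have "\<dots> \<le> card B + 1" using fB by (simp add: card_insert_if)
  finally show ?thesis using B K_def by simp
qed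

lemma dim_ker_many:
  assumes V: "cs.subspace V" "V \<subseteq> cs.span W" "finite W" and T: "finite T"
    and add: "\<forall>t\<in>T. \<forall>x\<in>V. \<forall>y\<in>V. pr (x+y) t = pr x t + pr y t"
    and sc: "\<forall>t\<in>T. \<forall>x\<in>V. \<forall>c. pr (cscale c x) t = c * pr x t"
  shows "cs.dim V \<le> cs.dim {v\<in>V. \<forall>t\<in>T. pr v t = 0} + card T"
  using T add sc
proof (induction T rule: finite_induct)
  case empty
  then show ?case by simp
next
  case (insert t T)
  define K where "K = {v\<in>V. \<forall>s\<in>T. pr v s = 0}"
  have KV: "K \<subseteq> V" by (auto simp: K_def)
  have Ksub: "cs.subspace K"
    unfolding cs.subspace_def
  proof (intro conjI ballI allI)
    have "pr 0 s = 0" if "s \<in> T" for s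
    proof -
      have "pr 0 s = pr (0+0) s" by simp
      also have "\<dots> = pr 0 s + pr 0 s" using insert.prems(1) that V(1) cs.subspace_0 by blast
      finally show ?thesis by simp
    qed
    thus "0 \<in> K" unfolding K_def using V(1) cs.subspace_0 by blast
  next
    fix x y assume "x \<in> K" "y \<in> K"
    hence xy: "x \<in> V" "y \<in> V" "\<forall>s\<in>T. pr x s = 0" "\<forall>s\<in>T. pr y s = 0" unfolding K_def by auto
    have "x + y \<in> V" using xy V(1) cs.subspace_add by blast
    moreover have "\<forall>s\<in>T. pr (x+y) s = 0"
    proof
      fix s assume "s \<in> T"
      hence "pr (x+y) s = pr x s + pr y s" using insert.prems(1) xy by blast
      thus "pr (x+y) s = 0" using xy \<open>s \<in> T\<close> by simp
    qed
    ultimately show "x + y \<in> K" unfolding K_def by blast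
  next
    fix c x assume "x \<in> K"
    hence xy: "x \<in> V" "\<forall>s\<in>T. pr x s = 0" unfolding K_def by auto
    have "cscale c x \<in> V" using xy V(1) cs.subspace_scale by blast
    moreover have "\<forall>s\<in>T. pr (cscale c x) s = 0"
    proof
      fix s assume "s \<in> T"
      hence "pr (cscale c x) s = c * pr x s" using insert.prems(2) xy by blast
      thus "pr (cscale c x) s = 0" using xy \<open>s \<in> T\<close> by simp
    qed
    ultimately show "cscale c x \<in> K" unfolding K_def by blast
  qed
  have "cs.dim K \<le> cs.dim {v\<in>K. pr v t = 0} + 1"
  proof (rule dim_ker_plus1[OF Ksub _ V(3)])
    show "K \<subseteq> cs.span W" using KV V by blast
    show "\<forall>x\<in>K. \<forall>y\<in>K. pr (x + y) t = pr x t + pr y t" using KV insert.prems(1) by blast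
    show "\<forall>x\<in>K. \<forall>c. pr (cscale c x) t = c * pr x t" using KV insert.prems(2) by blast
  qed
  moreover have "{v\<in>K. pr v t = 0} = {v\<in>V. \<forall>s\<in>insert t T. pr v s = 0}" by (auto simp: K_def)
  moreover have "cs.dim V \<le> cs.dim K + card T" unfolding K_def
    by (rule insert.IH) (use insert.prems in blast)+
  ultimately show ?case using insert by simp
qed


definition rk :: "nat \<Rightarrow> nat \<times> nat \<times> nat \<Rightarrow> nat" where
  "rk B t = (case t of (a,b,c) \<Rightarrow> a*B*B + b*B + c)"

lemma rk_add: "rk B (a+a',b+b',c+c') = rk B (a,b,c) + rk B (a',b',c')"
  by (simp add: rk_def algebra_simps)

lemma rk_inj:
  assumes "b < B" "c < B" "b' < B" "c' < B" "rk B (a,b,c) = rk B (a',b',c')"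
  shows "(a,b,c) = (a',b',c')"
proof -
  have e: "(a*B + b)*B + c = (a'*B + b')*B + c'" using assms(5) by (simp add: rk_def algebra_simps)
  have "((a*B + b)*B + c) mod B = c" using assms(2) by simp
  moreover have "((a'*B + b')*B + c') mod B = c'" using assms(4) by simp
  ultimately have cc: "c = c'" using e by simp
  have "((a*B + b)*B + c) div B = a*B+b" using assms(2) by simp
  moreover have "((a'*B + b')*B + c') div B = a'*B+b'" using assms(4) by simp
  ultimately have e2: "a*B+b = a'*B+b'" using e by simp
  have "(a*B+b) mod B = b" "(a'*B+b') mod B = b'" using assms(1,3) by simp_all
  hence bb: "b = b'" using e2 by simp
  have "(a*B+b) div B = a" "(a'*B+b') div B = a'" using assms(1,3) by simp_all
  hence "a = a'" using e2 by simp
  thus ?thesis using bb cc by simp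
qed

definition Rm :: "nat \<Rightarrow> poly3 set" where "Rm m = {f. homog m f}"

lemma homog_supp: "homog m f \<longleftrightarrow> supp_in (monoms m) f"
  by (auto simp: homog_def supp_in_def monoms_def)

lemma Rm_span: "Rm m \<subseteq> cs.span (delta ` monoms m)"
  using supp_in_span[of "monoms m"] by (auto simp: Rm_def homog_supp)

lemma homog_add: "homog m f \<Longrightarrow> homog m g \<Longrightarrow> homog m (f + g)"
  unfolding homog_def by (metis add.right_neutral plus_fun_apply)
lemma homog_scale: "homog m f \<Longrightarrow> homog m (cscale c f)"
  by (auto simp: homog_def cscale_def)
lemma homog_0: "homog m 0" by (auto simp: homog_def)

lemma Rm_subspace: "cs.subspace (Rm m)"
  unfolding cs.subspace_def Rm_def by (auto intro: homog_add homog_scale homog_0)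

lemma diffop_add: "diffop n F (f + g) = diffop n F f + diffop n F g"
proof
  fix t :: "nat\<times>nat\<times>nat" obtain i j k where t: "t = (i,j,k)" by (cases t) auto
  show "diffop n F (f + g) t = (diffop n F f + diffop n F g) t"
    unfolding t plus_fun_apply diffop_eq sum.distrib[symmetric]
    by (rule sum.cong) (auto simp: algebra_simps)
qed

lemma diffop_scale: "diffop n F (cscale c f) = cscale c (diffop n F f)"
proof
  fix t :: "nat\<times>nat\<times>nat" obtain i j k where t: "t = (i,j,k)" by (cases t) auto
  show "diffop n F (cscale c f) t = cscale c (diffop n F f) t"
    unfolding t cscale_def diffop_eq sum_distrib_left
    by (rule sum.cong) (auto simp: algebra_simps)
qed

lemma S_subspace: "cs.subspace (S_space n F m)"
  unfolding cs.subspace_def S_space_def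
proof (intro conjI ballI allI)
  show "0 \<in> {phi. homog m phi \<and> diffop n F phi = (\<lambda>_. 0)}"
    using diffop_scale[of n F 0 0] homog_0 by (simp add: cscale_def zero_fun_def)
next
  fix x y assume "x \<in> {phi. homog m phi \<and> diffop n F phi = (\<lambda>_. 0)}" "y \<in> {phi. homog m phi \<and> diffop n F phi = (\<lambda>_. 0)}"
  thus "x + y \<in> {phi. homog m phi \<and> diffop n F phi = (\<lambda>_. 0)}"
    using homog_add diffop_add[of n F x y] by (auto simp: fun_eq_iff)
next
  fix c x assume "x \<in> {phi. homog m phi \<and> diffop n F phi = (\<lambda>_. 0)}"
  thus "cscale c x \<in> {phi. homog m phi \<and> diffop n F phi = (\<lambda>_. 0)}"
    using homog_scale diffop_scale[of n F c x] by (auto simp: fun_eq_iff cscale_def)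
qed

definition ple :: "nat\<times>nat\<times>nat \<Rightarrow> nat\<times>nat\<times>nat \<Rightarrow> bool" where
  "ple s t = (case s of (a,b,c) \<Rightarrow> case t of (a',b',c') \<Rightarrow> a \<le> a' \<and> b \<le> b' \<and> c \<le> c')"

lemma exists_top:
  assumes "homog n F" "F \<noteq> (\<lambda>_. 0)"
  shows "\<exists>\<alpha>0. \<alpha>0 \<in> monoms n \<and> F \<alpha>0 \<noteq> 0 \<and> (\<forall>\<alpha>\<in>monoms n. F \<alpha> \<noteq> 0 \<longrightarrow> \<alpha> \<noteq> \<alpha>0 \<longrightarrow> rk (n+1) \<alpha> < rk (n+1) \<alpha>0)"
proof -
  define SF where "SF = {\<alpha>\<in>monoms n. F \<alpha> \<noteq> 0}"
  have fin: "finite SF" unfolding SF_def by simp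
  obtain t where t: "F t \<noteq> 0" using assms(2) by (meson ext)
  obtain a b c where tt: "t = (a,b,c)" by (cases t) auto
  have "t \<in> SF" using t assms(1) unfolding SF_def tt homog_def by auto
  hence ne: "SF \<noteq> {}" by auto
  define M where "M = Max (rk (n+1) ` SF)"
  have "M \<in> rk (n+1) ` SF" unfolding M_def using fin ne by (intro Max_in) auto
  then obtain \<alpha>0 where a0: "\<alpha>0 \<in> SF" "rk (n+1) \<alpha>0 = M" by auto
  have "\<forall>\<alpha>\<in>monoms n. F \<alpha> \<noteq> 0 \<longrightarrow> \<alpha> \<noteq> \<alpha>0 \<longrightarrow> rk (n+1) \<alpha> < rk (n+1) \<alpha>0"
  proof (intro ballI impI)
    fix \<alpha> assume h: "\<alpha> \<in> monoms n" "F \<alpha> \<noteq> 0" "\<alpha> \<noteq> \<alpha>0"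
    hence "\<alpha> \<in> SF" unfolding SF_def by auto
    hence le: "rk (n+1) \<alpha> \<le> M" unfolding M_def using fin by (intro Max_ge) auto
    obtain a b c where al: "\<alpha> = (a,b,c)" by (cases \<alpha>) auto
    obtain a' b' c' where al0: "\<alpha>0 = (a',b',c')" by (cases \<alpha>0) auto
    have "a+b+c = n" "a'+b'+c' = n" using h(1) a0(1) al al0 unfolding SF_def by auto
    hence "rk (n+1) \<alpha> \<noteq> rk (n+1) \<alpha>0" using rk_inj[of b "n+1" c b' c' a a'] h(3) al al0 by auto
    thus "rk (n+1) \<alpha> < rk (n+1) \<alpha>0" using le a0 by simp
  qed
  thus ?thesis using a0(1) unfolding SF_def by blast
qed

lemma S_zero_on_free:
  assumes a0: "\<alpha>0 \<in> monoms n" "F \<alpha>0 \<noteq> 0"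
    "\<forall>\<alpha>\<in>monoms n. F \<alpha> \<noteq> 0 \<longrightarrow> \<alpha> \<noteq> \<alpha>0 \<longrightarrow> rk B \<alpha> < rk B \<alpha>0"
    and phi: "phi \<in> S_space n F m"
    and free: "\<forall>\<gamma>\<in>monoms m. \<not> ple \<alpha>0 \<gamma> \<longrightarrow> phi \<gamma> = 0"
  shows "phi = (\<lambda>_. 0)"
proof -
  have hp: "homog m phi" and dz: "diffop n F phi = (\<lambda>_. 0)" using phi by (auto simp: S_space_def)
  obtain a0 b0 c0 where A0: "\<alpha>0 = (a0,b0,c0)" by (cases \<alpha>0) auto
  have "\<forall>\<gamma>. rk B \<gamma> = r \<longrightarrow> phi \<gamma> = 0" for r
  proof (induction r rule: less_induct)
    case (less r)
    show ?case
    proof (intro allI impI)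
      fix \<gamma> assume rg: "rk B \<gamma> = r"
      obtain i j k where G: "\<gamma> = (i,j,k)" by (cases \<gamma>) auto
      show "phi \<gamma> = 0"
      proof (cases "\<gamma> \<in> monoms m \<and> ple \<alpha>0 \<gamma>")
        case False
        then show ?thesis using free hp unfolding G homog_def by (cases "i+j+k = m") auto
      next
        case True
        hence le: "a0 \<le> i" "b0 \<le> j" "c0 \<le> k" by (auto simp: ple_def A0 G)
        define i' where "i' = i - a0"
        define j' where "j' = j - b0"
        define k' where "k' = k - c0"
        have "diffop n F phi (i',j',k') = 0" using dz by simp
        hence "(\<Sum>(a,b,c)\<in>monoms n. F (a,b,c) * ffr i' a * ffr j' b * ffr k' c * phi (i'+a,j'+b,k'+c)) = 0"
          by (simp add: diffop_eq)
        have rest: "\<forall>x\<in>monoms n - {\<alpha>0}. (case x of (a, b, c) \<Rightarrow> F (a, b, c) * ffr i' a * ffr j' b * ffr k' c * phi (i' + a, j' + b, k' + c)) = 0"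
          proof
            fix x assume x: "x \<in> monoms n - {\<alpha>0}"
            obtain a b c where X: "x = (a,b,c)" by (cases x) auto
            show "(case x of (a, b, c) \<Rightarrow> F (a, b, c) * ffr i' a * ffr j' b * ffr k' c * phi (i' + a, j' + b, k' + c)) = 0"
            proof (cases "F (a,b,c) = 0")
              case False
              hence "rk B (a,b,c) < rk B \<alpha>0" using a0(3) x X by auto
              moreover have "\<gamma> = (i'+a0,j'+b0,k'+c0)" using le unfolding G i'_def j'_def k'_def by simp
              ultimately have "rk B (i'+a,j'+b,k'+c) < rk B \<gamma>"
                unfolding A0 by (simp only: rk_add)
              hence "phi (i'+a,j'+b,k'+c) = 0" using less rg by blast
              thus ?thesis using X by simp
            qed (simp add: X)
          qed
        have "(\<Sum>(a,b,c)\<in>monoms n. F (a,b,c) * ffr i' a * ffr j' b * ffr k' c * phi (i'+a,j'+b,k'+c))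
            = F (a0,b0,c0) * ffr i' a0 * ffr j' b0 * ffr k' c0 * phi (i'+a0,j'+b0,k'+c0)"
          by (subst sum.remove[OF monoms_finite a0(1)], subst sum.neutral[OF rest]) (simp add: A0)
        moreover note \<open>(\<Sum>(a,b,c)\<in>monoms n. F (a,b,c) * ffr i' a * ffr j' b * ffr k' c * phi (i'+a,j'+b,k'+c)) = 0\<close>
        ultimately have "F (a0,b0,c0) * ffr i' a0 * ffr j' b0 * ffr k' c0 * phi \<gamma> = 0"
          using le unfolding G i'_def j'_def k'_def by simp
        thus ?thesis using a0(2) A0 ffr_nz by simp
      qed
    qed
  qed
  thus ?thesis by auto
qed

definition add3 :: "nat\<times>nat\<times>nat \<Rightarrow> nat\<times>nat\<times>nat \<Rightarrow> nat\<times>nat\<times>nat" where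
  "add3 s t = (case s of (a,b,c) \<Rightarrow> case t of (a',b',c') \<Rightarrow> (a+a',b+b',c+c'))"

lemma card_ple:
  assumes "\<alpha>0 \<in> monoms n"
  shows "card {\<gamma>\<in>monoms m. ple \<alpha>0 \<gamma>} = (if n \<le> m then card (monoms (m-n)) else 0)"
proof -
  obtain a0 b0 c0 where A0: "\<alpha>0 = (a0,b0,c0)" by (cases \<alpha>0) auto
  have n: "a0+b0+c0 = n" using assms A0 by simp
  show ?thesis
  proof (cases "n \<le> m")
    case True
    have "{\<gamma>\<in>monoms m. ple \<alpha>0 \<gamma>} = (\<lambda>\<beta>. add3 \<beta> \<alpha>0) ` monoms (m-n)"
    proof (intro equalityI subsetI)
      fix \<gamma> assume g: "\<gamma> \<in> {\<gamma>\<in>monoms m. ple \<alpha>0 \<gamma>}"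
      obtain i j k where G: "\<gamma> = (i,j,k)" by (cases \<gamma>) auto
      have "a0 \<le> i" "b0 \<le> j" "c0 \<le> k" "i+j+k = m" using g by (auto simp: G A0 ple_def)
      hence "\<gamma> = add3 (i-a0,j-b0,k-c0) \<alpha>0" "(i-a0,j-b0,k-c0) \<in> monoms (m-n)" using n by (auto simp: G A0 add3_def)
      thus "\<gamma> \<in> (\<lambda>\<beta>. add3 \<beta> \<alpha>0) ` monoms (m-n)" by blast
    next
      fix \<gamma> assume "\<gamma> \<in> (\<lambda>\<beta>. add3 \<beta> \<alpha>0) ` monoms (m-n)"
      then obtain i j k where "(i,j,k) \<in> monoms (m-n)" "\<gamma> = add3 (i,j,k) \<alpha>0" by auto
      thus "\<gamma> \<in> {\<gamma>\<in>monoms m. ple \<alpha>0 \<gamma>}" using n True by (auto simp: A0 add3_def ple_def)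
    qed
    moreover have "inj_on (\<lambda>\<beta>. add3 \<beta> \<alpha>0) (monoms (m-n))"
      by (rule inj_onI) (auto simp: add3_def A0 split: prod.splits)
    ultimately show ?thesis using True by (simp add: card_image)
  next
    case False
    have "{\<gamma>\<in>monoms m. ple \<alpha>0 \<gamma>} = {}"
    proof (rule ccontr)
      assume "{\<gamma>\<in>monoms m. ple \<alpha>0 \<gamma>} \<noteq> {}"
      then obtain i j k where "(i,j,k) \<in> monoms m" "ple \<alpha>0 (i,j,k)" by auto
      thus False using n False by (auto simp: A0 ple_def)
    qed
    thus ?thesis using False by simp
  qed
qed

lemma dim_S_le:
  assumes F: "homog n F" "F \<noteq> (\<lambda>_. 0)"
  shows "cs.dim (S_space n F m) \<le> card (monoms m) - (if n \<le> m then card (monoms (m-n)) else 0)"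
proof -
  obtain \<alpha>0 where a0: "\<alpha>0 \<in> monoms n" "F \<alpha>0 \<noteq> 0"
    "\<forall>\<alpha>\<in>monoms n. F \<alpha> \<noteq> 0 \<longrightarrow> \<alpha> \<noteq> \<alpha>0 \<longrightarrow> rk (n+1) \<alpha> < rk (n+1) \<alpha>0"
    using exists_top[OF F] by blast
  define Fr where "Fr = {\<gamma>\<in>monoms m. \<not> ple \<alpha>0 \<gamma>}"
  define h where "h = (\<lambda>phi::poly3. (\<lambda>\<gamma>. if \<gamma> \<in> Fr then phi \<gamma> else 0))"
  let ?S = "S_space n F m"
  have SR: "?S \<subseteq> cs.span (delta ` monoms m)" using Rm_span by (auto simp: S_space_def Rm_def)
  have "cs.dim ?S \<le> card Fr"
  proof (rule dim_le_inj[OF S_subspace SR _ _ _ _ _ _])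
    show "finite (delta ` monoms m)" by simp
    show "\<forall>x\<in>?S. \<forall>y\<in>?S. h (x + y) = h x + h y" by (auto simp: h_def fun_eq_iff)
    show "\<forall>x\<in>?S. \<forall>c. h (cscale c x) = cscale c (h x)" by (auto simp: h_def fun_eq_iff cscale_def)
    show "h ` ?S \<subseteq> {f. supp_in Fr f}" by (auto simp: h_def supp_in_def)
    show "finite Fr" by (simp add: Fr_def)
    show "inj_on h ?S"
    proof (rule inj_onI)
      fix x y assume xy: "x \<in> ?S" "y \<in> ?S" "h x = h y"
      define z where "z = x + cscale (-1) y"
      have "z \<in> ?S" unfolding z_def using xy S_subspace
        by (intro cs.subspace_add cs.subspace_scale) auto
      moreover have "\<forall>\<gamma>\<in>monoms m. \<not> ple \<alpha>0 \<gamma> \<longrightarrow> z \<gamma> = 0"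
      proof (intro ballI impI)
        fix \<gamma> assume "\<gamma> \<in> monoms m" "\<not> ple \<alpha>0 \<gamma>"
        hence "\<gamma> \<in> Fr" by (simp add: Fr_def)
        hence "x \<gamma> = y \<gamma>" using fun_cong[OF xy(3), of \<gamma>] by (simp add: h_def)
        thus "z \<gamma> = 0" by (simp add: z_def cscale_def)
      qed
      ultimately have "z = (\<lambda>_. 0)" by (rule S_zero_on_free[OF a0])
      thus "x = y" by (auto simp: z_def cscale_def fun_eq_iff dest: fun_cong)
    qed
  qed
  moreover have "Fr = monoms m - {\<gamma>\<in>monoms m. ple \<alpha>0 \<gamma>}" by (auto simp: Fr_def)
  hence "card Fr = card (monoms m) - card {\<gamma>\<in>monoms m. ple \<alpha>0 \<gamma>}"
    by (simp add: card_Diff_subset)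
  ultimately show ?thesis using card_ple[OF a0(1), of m] by simp
qed


lemma even_cons: "even ((x+1)*(x::nat))" by auto

lemma key_arith: "((e+k+2)*(k+2) + 1 - (k+1)*k div 2 :: nat) = (e+k+4)*(e+k+3) div 2 - (e+2)*(e+1) div 2"
proof -
  define P where "P = (k+1)*k" define Q where "Q = (e+k+4)*(e+k+3)" define R where "R = (e+2)*(e+1)"
  define L where "L = (e+k+2)*(k+2) + 1"
  have id: "Q + P = R + 2*L" unfolding P_def Q_def R_def L_def by (simp add: algebra_simps)
  have eP: "even P" unfolding P_def using even_cons by auto
  have eQ: "even Q" unfolding Q_def using even_cons[of "e+k+3"] by (simp add: algebra_simps)
  have eR: "even R" unfolding R_def using even_cons[of "e+1"] by (simp add: algebra_simps)
  have "Q div 2 + P div 2 = R div 2 + L" using id eP eQ eR by (elim evenE) auto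
  moreover have "R \<le> Q" unfolding R_def Q_def by (intro mult_mono) auto
  hence "R div 2 \<le> Q div 2" by (rule div_le_mono)
  ultimately have "L - P div 2 = Q div 2 - R div 2" by linarith
  thus ?thesis unfolding P_def Q_def R_def L_def .
qed

lemma r_num_eq:
  assumes "n \<ge> 2"
  shows "r_num n m = (m+2 choose 2) - (if n \<le> m then (m-n+2) choose 2 else 0)"
proof (cases "n \<le> m")
  case True
  obtain k where k: "n = k+2" using assms by (metis add.commute le_Suc_ex)
  obtain e where e: "m = e+n" using True by (metis add.commute le_Suc_ex le_add_diff_inverse)
  have "r_num n m = (e+k+2)*(k+2) + 1 - (k+1)*k div 2"
    using True unfolding r_num_def k e by (simp add: algebra_simps)
  also have "\<dots> = (e+k+4)*(e+k+3) div 2 - (e+2)*(e+1) div 2" by (rule key_arith)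
  also have "\<dots> = (m+2 choose 2) - ((m-n+2) choose 2)"
    unfolding choose_two e k by (simp add: algebra_simps)
  finally show ?thesis using True by simp
next
  case False
  then show ?thesis by (simp add: r_num_def)
qed

lemma card_monoms: "card (monoms d) = (d+2) choose 2"
proof (induction d)
  case 0
  have "monoms 0 = {(0,0,0)}" by (auto simp: monoms_def)
  then show ?case by (simp add: choose_two)
next
  case (Suc d)
  have A: "monoms (Suc d) = (\<lambda>b. (0,b,Suc d - b)) ` {..Suc d} \<union> (\<lambda>(a,b,c). (Suc a,b,c)) ` monoms d"
  proof (intro equalityI subsetI)
    fix x assume "x \<in> monoms (Suc d)"
    then obtain a b c where x: "x = (a,b,c)" "a+b+c = Suc d" by (cases x) auto
    show "x \<in> (\<lambda>b. (0,b,Suc d - b)) ` {..Suc d} \<union> (\<lambda>(a,b,c). (Suc a,b,c)) ` monoms d"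
    proof (cases a)
      case 0 thus ?thesis using x by (auto intro!: image_eqI[of _ _ b])
    next
      case (Suc a') thus ?thesis using x by (auto intro!: image_eqI[of _ _ "(a',b,c)"])
    qed
  qed auto
  have "card ((\<lambda>b. (0,b,Suc d - b)) ` {..Suc d}) = Suc (Suc d)"
    by (subst card_image) (auto intro: inj_onI)
  moreover have "card ((\<lambda>(a,b,c). (Suc a,b,c)) ` monoms d) = card (monoms d)"
    by (subst card_image) (auto intro: inj_onI)
  moreover have "(\<lambda>b. (0,b,Suc d - b)) ` {..Suc d} \<inter> (\<lambda>(a,b,c). (Suc a,b,c)) ` monoms d = {}" by auto
  ultimately have "card (monoms (Suc d)) = Suc (Suc d) + card (monoms d)"
    unfolding A by (subst card_Un_disjoint) auto
  also have "\<dots> = (Suc d + 2) choose 2" using Suc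
    by (simp add: numeral_2_eq_2)
  finally show ?case .
qed

lemma delta_inj: "inj delta"
  by (rule injI) (metis delta_def zero_neq_one)

lemma dim_Rm: "cs.dim (Rm m) = card (monoms m)"
proof (rule cs.dim_unique[of "delta ` monoms m"])
  show "delta ` monoms m \<subseteq> Rm m" by (auto simp: Rm_def homog_def delta_def split: if_splits)
  show "Rm m \<subseteq> cs.span (delta ` monoms m)" by (rule Rm_span)
  show "card (delta ` monoms m) = card (monoms m)" using delta_inj by (simp add: card_image inj_on_subset)
  show "cs.independent (delta ` monoms m)"
  proof
    assume "cs.dependent (delta ` monoms m)"
    hence "\<exists>u. (\<exists>w\<in>delta ` monoms m. u w \<noteq> 0) \<and> (\<Sum>w\<in>delta ` monoms m. cscale (u w) w) = 0"
      by (simp only: cs.dependent_finite[of "delta ` monoms m", OF finite_imageI[OF monoms_finite]])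
    then obtain u where u: "\<exists>w\<in>delta ` monoms m. u w \<noteq> 0" "(\<Sum>w\<in>delta ` monoms m. cscale (u w) w) = 0" by blast
    then obtain t where t: "t \<in> monoms m" "u (delta t) \<noteq> 0" by auto
    have "(\<Sum>w\<in>delta ` monoms m. cscale (u w) w) t = (\<Sum>s\<in>monoms m. cscale (u (delta s)) (delta s) t)"
      by (subst sum.reindex) (auto simp: sum_fun inj_on_subset[OF delta_inj])
    also have "\<dots> = (\<Sum>s\<in>monoms m. if s = t then u (delta s) else 0)"
      by (rule sum.cong) (auto simp: cscale_def delta_def)
    also have "\<dots> = u (delta t)" using t by simp
    finally show False using u t by simp
  qed
qed

definition pr :: "nat \<Rightarrow> poly3 \<Rightarrow> poly3 \<Rightarrow> complex" where
  "pr m g phi = (\<Sum>(a,b,c)\<in>monoms m. fact a * fact b * fact c * g (a,b,c) * phi (a,b,c))"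

lemma pr_add1: "pr m (x + y) t = pr m x t + pr m y t"
  unfolding pr_def sum.distrib[symmetric] by (rule sum.cong) (auto simp: algebra_simps)
lemma pr_scale1: "pr m (cscale c x) t = c * pr m x t"
  unfolding pr_def sum_distrib_left by (rule sum.cong) (auto simp: algebra_simps cscale_def)
lemma pr_add2: "pr m g (x + y) = pr m g x + pr m g y"
  unfolding pr_def sum.distrib[symmetric] by (rule sum.cong) (auto simp: algebra_simps)
lemma pr_scale2: "pr m g (cscale c x) = c * pr m g x"
  unfolding pr_def sum_distrib_left by (rule sum.cong) (auto simp: algebra_simps cscale_def)

lemma pr_ppow: "pr m g (ppow (linform \<xi> \<eta> \<zeta>) m) = fact m * eval3 m g \<xi> \<eta> \<zeta>"
  unfolding pr_def eval3_def sum_distrib_left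
proof (rule sum.cong, simp, clarify)
  fix a b c assume "(a,b,c) \<in> monoms m"
  hence abc: "a+b+c = m" by simp
  have "fact a * fact b * fact c * mcoef a b c = (fact m :: complex)"
    unfolding mcoef_def abc by simp
  thus "fact a * fact b * fact c * g (a, b, c) * ppow (linform \<xi> \<eta> \<zeta>) m (a, b, c) =
         fact m * (g (a, b, c) * \<xi> ^ a * \<eta> ^ b * \<zeta> ^ c)"
    using abc by (simp add: ppow_linform algebra_simps)
qed

lemma pr_span_zero:
  assumes "\<forall>t\<in>T. pr m g t = 0" "x \<in> cs.span T"
  shows "pr m g x = 0"
  using assms(2)
proof (induction rule: cs.span_induct_alt)
  case base thus ?case by (simp add: pr_def)
next
  case (step c t y)
  thus ?case using assms(1) by (simp only: pr_add2 pr_scale2) simp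
qed


type_synonym P2 = "complex poly poly"

definition ev2 :: "P2 \<Rightarrow> complex \<Rightarrow> complex \<Rightarrow> complex" where
  "ev2 P s t = poly (poly P [:t:]) s"

definition evs :: "complex \<Rightarrow> P2 \<Rightarrow> complex poly" where
  "evs s P = map_poly (\<lambda>c. poly c s) P"

lemma poly_evs: "poly (evs s P) t = ev2 P s t"
  unfolding evs_def ev2_def
  by (induction P) (auto simp: map_poly_pCons)

lemma ev2_add[simp]: "ev2 (P + Q) s t = ev2 P s t + ev2 Q s t" by (simp add: ev2_def)
lemma ev2_mult[simp]: "ev2 (P * Q) s t = ev2 P s t * ev2 Q s t" by (simp add: ev2_def)
lemma ev2_pow[simp]: "ev2 (P ^ k) s t = ev2 P s t ^ k" by (simp add: ev2_def poly_power)
lemma ev2_smult[simp]: "ev2 (smult c P) s t = poly c s * ev2 P s t" by (simp add: ev2_def)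
lemma ev2_sum[simp]: "ev2 (\<Sum>x\<in>A. f x) s t = (\<Sum>x\<in>A. ev2 (f x) s t)"
  by (induction A rule: infinite_finite_induct) (auto simp: ev2_def)
lemma ev2_0[simp]: "ev2 0 s t = 0" by (simp add: ev2_def)

definition cc :: "P2 \<Rightarrow> nat \<Rightarrow> nat \<Rightarrow> complex" where "cc P i k = coeff (coeff P k) i"

definition TB :: "nat \<Rightarrow> P2 \<Rightarrow> bool" where "TB d P \<longleftrightarrow> (\<forall>i k. cc P i k \<noteq> 0 \<longrightarrow> i + k \<le> d)"

lemma cc_mult: "cc (P * Q) i k = (\<Sum>k1\<le>k. \<Sum>i1\<le>i. cc P i1 k1 * cc Q (i - i1) (k - k1))"
  unfolding cc_def coeff_mult coeff_sum by simp

lemma TB_mult: assumes "TB d1 P" "TB d2 Q" shows "TB (d1 + d2) (P * Q)"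
  unfolding TB_def
proof (intro allI impI)
  fix i k assume "cc (P * Q) i k \<noteq> 0"
  hence "(\<Sum>k1\<le>k. \<Sum>i1\<le>i. cc P i1 k1 * cc Q (i - i1) (k - k1)) \<noteq> 0" by (simp add: cc_mult)
  then obtain k1 where k1: "k1 \<le> k" "(\<Sum>i1\<le>i. cc P i1 k1 * cc Q (i - i1) (k - k1)) \<noteq> 0"
    by (meson atMost_iff sum.not_neutral_contains_not_neutral)
  then obtain i1 where i1: "i1 \<le> i" "cc P i1 k1 * cc Q (i - i1) (k - k1) \<noteq> 0"
    by (meson atMost_iff sum.not_neutral_contains_not_neutral)
  hence "cc P i1 k1 \<noteq> 0" "cc Q (i - i1) (k - k1) \<noteq> 0" by auto
  hence "i1 + k1 \<le> d1" "(i - i1) + (k - k1) \<le> d2" using assms unfolding TB_def by blast+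
  thus "i + k \<le> d1 + d2" using k1 i1 by linarith
qed

lemma TB_add: "TB d P \<Longrightarrow> TB d Q \<Longrightarrow> TB d (P + Q)"
  unfolding TB_def cc_def by (metis add.right_neutral coeff_add)

lemma TB_0: "TB d 0" by (simp add: TB_def cc_def)

lemma TB_sum: "(\<And>x. x \<in> A \<Longrightarrow> TB d (f x)) \<Longrightarrow> TB d (\<Sum>x\<in>A. f x)"
  by (induction A rule: infinite_finite_induct) (auto intro: TB_add TB_0)

lemma TB_smult_const: "TB d P \<Longrightarrow> TB d (smult [:c:] P)"
  unfolding TB_def cc_def by (simp add: coeff_smult)

lemma TB_mono: "TB d P \<Longrightarrow> d \<le> d' \<Longrightarrow> TB d' P" unfolding TB_def by force

lemma TB_pow: "TB d P \<Longrightarrow> TB (k*d) (P ^ k)"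
proof (induction k)
  case 0 thus ?case by (auto simp: TB_def cc_def coeff_1 split: if_splits)
next
  case (Suc k) thus ?case using TB_mult[of d P "k*d" "P^k"] by (simp add: add.commute)
qed

lemma coeff_mult_top:
  fixes p q :: "'a::comm_semiring_0 poly"
  assumes "degree p \<le> i" "degree q \<le> j"
  shows "coeff (p * q) (i + j) = coeff p i * coeff q j"
proof -
  have "coeff (p * q) (i + j) = (\<Sum>l\<le>i+j. coeff p l * coeff q (i + j - l))" by (rule coeff_mult)
  also have "\<dots> = (\<Sum>l\<le>i+j. if l = i then coeff p i * coeff q j else 0)"
  proof (rule sum.cong[OF refl])
    fix l assume "l \<in> {..i+j}"
    show "coeff p l * coeff q (i + j - l) = (if l = i then coeff p i * coeff q j else 0)"
    proof (cases "l < i")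
      case True hence "coeff q (i+j-l) = 0" using assms(2) by (intro coeff_eq_0) auto
      thus ?thesis using True by simp
    next
      case False
      show ?thesis
      proof (cases "l = i")
        case False hence "coeff p l = 0" using \<open>\<not> l < i\<close> assms(1) by (intro coeff_eq_0) auto
        thus ?thesis using False by simp
      qed simp
    qed
  qed
  also have "\<dots> = coeff p i * coeff q j" by simp
  finally show ?thesis .
qed

lemma degree_mult_le': "degree p \<le> i \<Longrightarrow> degree q \<le> j \<Longrightarrow> degree (p * q) \<le> i + j"
  by (meson add_le_mono degree_mult_le le_trans)

lemma pow_top:
  fixes p :: "'a::comm_semiring_1 poly"
  assumes "degree p \<le> 1"
  shows "degree (p ^ e) \<le> e \<and> coeff (p ^ e) e = coeff p 1 ^ e"
proof (induction e)
  case 0 thus ?case by simp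
next
  case (Suc e)
  have "degree (p ^ Suc e) \<le> 1 + e" unfolding power_Suc using Suc assms by (intro degree_mult_le') auto
  moreover have "coeff (p ^ Suc e) (1 + e) = coeff p 1 * coeff (p ^ e) e"
    unfolding power_Suc using Suc assms by (intro coeff_mult_top) auto
  ultimately show ?case using Suc by simp
qed


lemma eval3_scale: "eval3 d g (l*x) (l*y) (l*z) = l^d * eval3 d g x y z"
  unfolding eval3_def sum_distrib_left
  by (rule sum.cong) (auto simp: power_mult_distrib power_add[symmetric] algebra_simps)

definition XP :: "nat \<Rightarrow> poly3 \<Rightarrow> complex \<Rightarrow> complex \<Rightarrow> complex poly" where
  "XP d g y z = (\<Sum>(i,j,k)\<in>monoms d. smult (g (i,j,k) * y^j * z^k) (monom 1 i))"

lemma poly_XP: "poly (XP d g y z) x = eval3 d g x y z"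
  unfolding XP_def eval3_def poly_sum
  by (rule sum.cong) (auto simp: poly_monom algebra_simps)

lemma coeff_XP: "coeff (XP d g y z) i0 = (\<Sum>(i,j,k)\<in>monoms d. g (i,j,k) * y^j * z^k * (if i = i0 then 1 else 0))"
  unfolding XP_def coeff_sum
  by (rule sum.cong) (auto simp: coeff_monom)

lemma eval3_zero_coeffs:
  assumes "homog d g" "\<forall>x y z. eval3 d g x y z = 0"
  shows "g = (\<lambda>_. 0)"
proof
  fix t :: "nat \<times> nat \<times> nat" obtain i0 j0 k0 where t: "t = (i0,j0,k0)" by (cases t) auto
  show "g t = 0"
  proof (cases "i0+j0+k0 = d")
    case False thus ?thesis using assms(1) t by (auto simp: homog_def)
  next
    case True
    define YP where "YP = (\<Sum>(i,j,k)\<in>monoms d. smult (g (i,j,k) * (if i = i0 then 1 else 0)) (monom 1 j))"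
    have "\<forall>y. poly YP y = 0"
    proof
      fix y
      have "XP d g y 1 = 0" using assms(2) poly_all_0_iff_0[of "XP d g y 1"] by (simp add: poly_XP)
      hence "coeff (XP d g y 1) i0 = 0" by simp
      moreover have "poly YP y = coeff (XP d g y 1) i0"
        unfolding YP_def coeff_XP poly_sum by (rule sum.cong) (auto simp: poly_monom)
      ultimately show "poly YP y = 0" by simp
    qed
    hence "YP = 0" using poly_all_0_iff_0 by blast
    hence "coeff YP j0 = 0" by simp
    moreover have "coeff YP j0 = (\<Sum>x\<in>monoms d. if x = (i0,j0,k0) then g x else 0)"
      unfolding YP_def coeff_sum
    proof (rule sum.cong[OF refl], clarify)
      fix i j k assume "(i,j,k) \<in> monoms d"
      hence "i+j+k = d" by simp
      thus "coeff (smult (g (i, j, k) * (if i = i0 then 1 else 0)) (monom 1 j)) j0 =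
           (if (i, j, k) = (i0, j0, k0) then g (i, j, k) else 0)"
        using True by (auto simp: coeff_monom)
    qed
    also have "\<dots> = g (i0,j0,k0)" using True by simp
    finally show ?thesis using t by simp
  qed
qed

lemma eval3_zero_off_line:
  assumes "\<forall>x y z. x \<noteq> a * z \<longrightarrow> eval3 d g x y z = 0"
  shows "\<forall>x y z. eval3 d g x y z = 0"
proof (intro allI)
  fix x y z
  have "{x'. x' \<noteq> a * z} \<subseteq> {x'. poly (XP d g y z) x' = 0}" using assms by (auto simp: poly_XP)
  moreover have "infinite {x'::complex. x' \<noteq> a * z}"
  proof -
    have "{x'::complex. x' \<noteq> a * z} = UNIV - {a*z}" by auto
    thus ?thesis by (simp add: infinite_UNIV_char_0)
  qed
  ultimately have "infinite {x'. poly (XP d g y z) x' = 0}" using finite_subset by blast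
  hence "XP d g y z = 0" using poly_roots_finite by blast
  thus "eval3 d g x y z = 0" using poly_XP[of d g y z x] by simp
qed

definition L1 :: "complex \<Rightarrow> P2" where "L1 a = [:[:1:], [:a:]:]"
definition L2 :: "complex \<Rightarrow> P2" where "L2 b = [:[:0,1:], [:b:]:]"
definition L3 :: "P2" where "L3 = [:0, 1:]"

definition Gam :: "complex \<Rightarrow> complex \<Rightarrow> nat \<Rightarrow> poly3 \<Rightarrow> P2" where
  "Gam a b d g = (\<Sum>(i,j,k)\<in>monoms d. smult [:g (i,j,k):] (L1 a ^ i * L2 b ^ j * L3 ^ k))"

lemma ev2_L: "ev2 (L1 a) s t = 1 + a * t" "ev2 (L2 b) s t = s + b * t" "ev2 L3 s t = t"
  by (auto simp: ev2_def L1_def L2_def L3_def algebra_simps)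

lemma ev2_Gam: "ev2 (Gam a b d g) s t = eval3 d g (1 + a*t) (s + b*t) t"
  unfolding Gam_def eval3_def ev2_sum
  by (rule sum.cong) (auto simp: ev2_L)

lemma TB_L: "TB 1 (L1 a)" "TB 1 (L2 b)" "TB 1 L3"
  by (auto simp: TB_def cc_def L1_def L2_def L3_def coeff_pCons split: nat.splits)

lemma TB_Gam: "TB d (Gam a b d g)"
  unfolding Gam_def
proof (rule TB_sum, clarify)
  fix i j k assume "(i,j,k) \<in> monoms d"
  hence d: "d = i*1 + j*1 + k*1" by simp
  show "TB d (smult [:g (i, j, k):] (L1 a ^ i * L2 b ^ j * L3 ^ k))"
    unfolding d by (intro TB_smult_const TB_mult TB_pow TB_L)
qed

lemma deg_L: "degree (L1 a) \<le> 1" "degree (L2 b) \<le> 1" "degree L3 \<le> 1"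
  "coeff (L1 a) 1 = [:a:]" "coeff (L2 b) 1 = [:b:]" "coeff L3 1 = 1"
  unfolding L1_def L2_def L3_def
  by (simp_all add: degree_pCons_le)

lemma term_top:
  assumes "i+j+k = n"
  shows "degree (L1 a ^ i * L2 b ^ j * L3 ^ k) \<le> n \<and> coeff (L1 a ^ i * L2 b ^ j * L3 ^ k) n = [:a^i * b^j:]"
proof -
  have p1: "degree (L1 a ^ i) \<le> i" "coeff (L1 a ^ i) i = [:a:]^i" using pow_top[OF deg_L(1)[of a], where e=i] deg_L by auto
  have p2: "degree (L2 b ^ j) \<le> j" "coeff (L2 b ^ j) j = [:b:]^j" using pow_top[OF deg_L(2)[of b], where e=j] deg_L by auto
  have p3: "degree (L3 ^ k) \<le> k" "coeff (L3 ^ k) k = 1" using pow_top[OF deg_L(3), where e=k] deg_L by auto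
  have d12: "degree (L1 a ^ i * L2 b ^ j) \<le> i + j" by (rule degree_mult_le'[OF p1(1) p2(1)])
  have c12: "coeff (L1 a ^ i * L2 b ^ j) (i + j) = [:a:]^i * [:b:]^j"
    by (simp add: coeff_mult_top[OF p1(1) p2(1)] p1 p2)
  have "degree (L1 a ^ i * L2 b ^ j * L3 ^ k) \<le> i + j + k" by (rule degree_mult_le'[OF d12 p3(1)])
  moreover have "coeff (L1 a ^ i * L2 b ^ j * L3 ^ k) (i + j + k) = [:a:]^i * [:b:]^j * 1"
    by (simp add: coeff_mult_top[OF d12 p3(1)] c12 p3)
  ultimately show ?thesis using assms by (simp add: poly_const_pow)
qed

lemma sum_const_poly: "(\<Sum>x\<in>A. [:f x:]) = [:\<Sum>x\<in>A. f x:]"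
  by (induction A rule: infinite_finite_induct) auto

lemma Gam_top: "degree (Gam a b n F) \<le> n \<and> coeff (Gam a b n F) n = [:eval3 n F a b 1:]"
proof
  show "degree (Gam a b n F) \<le> n" unfolding Gam_def
  proof (rule degree_sum_le, simp, clarify)
    fix i j k assume "(i,j,k) \<in> monoms n"
    hence "degree (L1 a ^ i * L2 b ^ j * L3 ^ k) \<le> n" using term_top[of i j k n a b] by simp
    thus "degree (smult [:F (i,j,k):] (L1 a ^ i * L2 b ^ j * L3 ^ k)) \<le> n"
      using degree_smult_le order.trans by blast
  qed
  have "coeff (Gam a b n F) n = (\<Sum>(i,j,k)\<in>monoms n. [:F (i,j,k) * a^i * b^j:])"
    unfolding Gam_def coeff_sum
    by (rule sum.cong) (auto simp: term_top)
  also have "\<dots> = [:eval3 n F a b 1:]"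
    unfolding eval3_def sum_const_poly[symmetric] by (rule sum.cong) auto
  finally show "coeff (Gam a b n F) n = [:eval3 n F a b 1:]" .
qed

lemma Gam_inj:
  assumes "homog d g" "Gam a b d g = 0"
  shows "g = (\<lambda>_. 0)"
proof (rule eval3_zero_coeffs[OF assms(1) eval3_zero_off_line[of a]], intro allI impI)
  fix x y z assume xz: "x \<noteq> a * z"
  define l where "l = x - a*z"
  have l: "l \<noteq> 0" using xz by (simp add: l_def)
  define t where "t = z / l"
  define s where "s = y / l - b * t"
  have "l * t = z" using l by (simp add: t_def)
  hence e1: "x = l * (1 + a*t)" by (simp add: l_def algebra_simps)
  have e2: "y = l * (s + b*t)" using l by (simp add: s_def)
  have e3: "z = l * t" using \<open>l * t = z\<close> by simp
  from e1 e2 e3 have "eval3 d g x y z = l^d * eval3 d g (1 + a*t) (s + b*t) t" by (simp add: eval3_scale)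
  also have "eval3 d g (1 + a*t) (s + b*t) t = 0" using ev2_Gam[of a b d g s t] assms(2) by simp
  finally show "eval3 d g x y z = 0" by simp
qed

lemma Gam_add: "Gam a b d (f + g) = Gam a b d f + Gam a b d g"
  unfolding Gam_def sum.distrib[symmetric] by (rule sum.cong) (auto simp: smult_add_left)

lemma Gam_scale: "Gam a b d (cscale c f) = smult [:c:] (Gam a b d f)"
  unfolding Gam_def smult_sum2 by (rule sum.cong) (auto simp: cscale_def mult.commute)


lemma pdx_eval:
  assumes "homog d g"
  shows "eval3 (d-1) (pdx g) x y z = (\<Sum>(i,j,k)\<in>monoms d. g (i,j,k) * of_nat i * x^(i-1) * y^j * z^k)"
proof (cases d)
  case 0
  have "pdx g (0,0,0) = 0" using assms 0 by (auto simp: pdx_def homog_def)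
  moreover have "monoms 0 = {(0,0,0)}" by (auto simp: monoms_def)
  ultimately show ?thesis using 0 by (simp add: eval3_def)
next
  case (Suc e)
  have "(\<Sum>(i,j,k)\<in>monoms d. g (i,j,k) * of_nat i * x^(i-1) * y^j * z^k)
      = (\<Sum>(i,j,k)\<in>(\<lambda>(i,j,k). (Suc i,j,k)) ` monoms e. g (i,j,k) * of_nat i * x^(i-1) * y^j * z^k)"
  proof (rule sum.mono_neutral_right)
    show "finite (monoms d)" by simp
    show "(\<lambda>(i,j,k). (Suc i,j,k)) ` monoms e \<subseteq> monoms d" by (auto simp: Suc)
    show "\<forall>t\<in>monoms d - (\<lambda>(i,j,k). (Suc i,j,k)) ` monoms e. (case t of (i,j,k) \<Rightarrow> g (i,j,k) * of_nat i * x^(i-1) * y^j * z^k) = 0"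
    proof
      fix t assume t: "t \<in> monoms d - (\<lambda>(i,j,k). (Suc i,j,k)) ` monoms e"
      obtain i j k where T: "t = (i,j,k)" by (cases t) auto
      have "i = 0"
      proof (rule ccontr)
        assume "i \<noteq> 0" then obtain i' where "i = Suc i'" by (metis not0_implies_Suc)
        hence "t \<in> (\<lambda>(i,j,k). (Suc i,j,k)) ` monoms e" using t T Suc by (auto intro!: image_eqI[of _ _ "(i',j,k)"])
        thus False using t by blast
      qed
      thus "(case t of (i,j,k) \<Rightarrow> g (i,j,k) * of_nat i * x^(i-1) * y^j * z^k) = 0" using T by simp
    qed
  qed
  also have "\<dots> = (\<Sum>(i,j,k)\<in>monoms e. g (Suc i,j,k) * of_nat (Suc i) * x^i * y^j * z^k)"
    by (subst sum.reindex) (auto intro: inj_onI intro!: sum.cong)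
  also have "\<dots> = eval3 (d-1) (pdx g) x y z"
    unfolding eval3_def Suc by (rule sum.cong) (auto simp: pdx_def)
  finally show ?thesis by simp
qed

lemma pdy_eval:
  assumes "homog d g"
  shows "eval3 (d-1) (pdy g) x y z = (\<Sum>(i,j,k)\<in>monoms d. g (i,j,k) * of_nat j * x^i * y^(j-1) * z^k)"
proof (cases d)
  case 0
  have "pdy g (0,0,0) = 0" using assms 0 by (auto simp: pdy_def homog_def)
  moreover have "monoms 0 = {(0,0,0)}" by (auto simp: monoms_def)
  ultimately show ?thesis using 0 by (simp add: eval3_def)
next
  case (Suc e)
  have "(\<Sum>(i,j,k)\<in>monoms d. g (i,j,k) * of_nat j * x^i * y^(j-1) * z^k)
      = (\<Sum>(i,j,k)\<in>(\<lambda>(i,j,k). (i,Suc j,k)) ` monoms e. g (i,j,k) * of_nat j * x^i * y^(j-1) * z^k)"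
  proof (rule sum.mono_neutral_right)
    show "finite (monoms d)" by simp
    show "(\<lambda>(i,j,k). (i,Suc j,k)) ` monoms e \<subseteq> monoms d" by (auto simp: Suc)
    show "\<forall>t\<in>monoms d - (\<lambda>(i,j,k). (i,Suc j,k)) ` monoms e. (case t of (i,j,k) \<Rightarrow> g (i,j,k) * of_nat j * x^i * y^(j-1) * z^k) = 0"
    proof
      fix t assume t: "t \<in> monoms d - (\<lambda>(i,j,k). (i,Suc j,k)) ` monoms e"
      obtain i j k where T: "t = (i,j,k)" by (cases t) auto
      have "j = 0"
      proof (rule ccontr)
        assume "j \<noteq> 0" then obtain j' where "j = Suc j'" by (metis not0_implies_Suc)
        hence "t \<in> (\<lambda>(i,j,k). (i,Suc j,k)) ` monoms e" using t T Suc by (auto intro!: image_eqI[of _ _ "(i,j',k)"])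
        thus False using t by blast
      qed
      thus "(case t of (i,j,k) \<Rightarrow> g (i,j,k) * of_nat j * x^i * y^(j-1) * z^k) = 0" using T by simp
    qed
  qed
  also have "\<dots> = (\<Sum>(i,j,k)\<in>monoms e. g (i,Suc j,k) * of_nat (Suc j) * x^i * y^j * z^k)"
    by (subst sum.reindex) (auto intro: inj_onI intro!: sum.cong)
  also have "\<dots> = eval3 (d-1) (pdy g) x y z"
    unfolding eval3_def Suc by (rule sum.cong) (auto simp: pdy_def)
  finally show ?thesis by simp
qed

lemma pdz_eval:
  assumes "homog d g"
  shows "eval3 (d-1) (pdz g) x y z = (\<Sum>(i,j,k)\<in>monoms d. g (i,j,k) * of_nat k * x^i * y^j * z^(k-1))"
proof (cases d)
  case 0
  have "pdz g (0,0,0) = 0" using assms 0 by (auto simp: pdz_def homog_def)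
  moreover have "monoms 0 = {(0,0,0)}" by (auto simp: monoms_def)
  ultimately show ?thesis using 0 by (simp add: eval3_def)
next
  case (Suc e)
  have "(\<Sum>(i,j,k)\<in>monoms d. g (i,j,k) * of_nat k * x^i * y^j * z^(k-1))
      = (\<Sum>(i,j,k)\<in>(\<lambda>(i,j,k). (i,j,Suc k)) ` monoms e. g (i,j,k) * of_nat k * x^i * y^j * z^(k-1))"
  proof (rule sum.mono_neutral_right)
    show "finite (monoms d)" by simp
    show "(\<lambda>(i,j,k). (i,j,Suc k)) ` monoms e \<subseteq> monoms d" by (auto simp: Suc)
    show "\<forall>t\<in>monoms d - (\<lambda>(i,j,k). (i,j,Suc k)) ` monoms e. (case t of (i,j,k) \<Rightarrow> g (i,j,k) * of_nat k * x^i * y^j * z^(k-1)) = 0"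
    proof
      fix t assume t: "t \<in> monoms d - (\<lambda>(i,j,k). (i,j,Suc k)) ` monoms e"
      obtain i j k where T: "t = (i,j,k)" by (cases t) auto
      have "k = 0"
      proof (rule ccontr)
        assume "k \<noteq> 0" then obtain k' where "k = Suc k'" by (metis not0_implies_Suc)
        hence "t \<in> (\<lambda>(i,j,k). (i,j,Suc k)) ` monoms e" using t T Suc by (auto intro!: image_eqI[of _ _ "(i,j,k')"])
        thus False using t by blast
      qed
      thus "(case t of (i,j,k) \<Rightarrow> g (i,j,k) * of_nat k * x^i * y^j * z^(k-1)) = 0" using T by simp
    qed
  qed
  also have "\<dots> = (\<Sum>(i,j,k)\<in>monoms e. g (i,j,Suc k) * of_nat (Suc k) * x^i * y^j * z^k)"
    by (subst sum.reindex) (auto intro: inj_onI intro!: sum.cong)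
  also have "\<dots> = eval3 (d-1) (pdz g) x y z"
    unfolding eval3_def Suc by (rule sum.cong) (auto simp: pdz_def)
  finally show ?thesis by simp
qed


lemma euler:
  assumes "homog d g"
  shows "x * eval3 (d-1) (pdx g) x y z + y * eval3 (d-1) (pdy g) x y z + z * eval3 (d-1) (pdz g) x y z
     = of_nat d * eval3 d g x y z"
proof -
  have "x * eval3 (d-1) (pdx g) x y z + y * eval3 (d-1) (pdy g) x y z + z * eval3 (d-1) (pdz g) x y z
     = (\<Sum>(i,j,k)\<in>monoms d. g (i,j,k) * of_nat (i+j+k) * x^i * y^j * z^k)"
    unfolding pdx_eval[OF assms] pdy_eval[OF assms] pdz_eval[OF assms] sum_distrib_left sum.distrib[symmetric]
  proof (rule sum.cong[OF refl], clarify)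
    fix i j k
    have a: "x * (of_nat i * x^(i-1)) = of_nat i * x^i" by (cases i) auto
    have b: "y * (of_nat j * y^(j-1)) = of_nat j * y^j" by (cases j) auto
    have c: "z * (of_nat k * z^(k-1)) = of_nat k * z^k" by (cases k) auto
    show "x * (g (i, j, k) * of_nat i * x ^ (i - 1) * y ^ j * z ^ k) +
         y * (g (i, j, k) * of_nat j * x ^ i * y ^ (j - 1) * z ^ k) +
         z * (g (i, j, k) * of_nat k * x ^ i * y ^ j * z ^ (k - 1)) =
         g (i, j, k) * of_nat (i + j + k) * x ^ i * y ^ j * z ^ k"
    proof -
      have "x * (g (i, j, k) * of_nat i * x ^ (i - 1) * y ^ j * z ^ k) +
         y * (g (i, j, k) * of_nat j * x ^ i * y ^ (j - 1) * z ^ k) +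
         z * (g (i, j, k) * of_nat k * x ^ i * y ^ j * z ^ (k - 1)) =
         g (i,j,k) * (x * (of_nat i * x^(i-1))) * y^j * z^k + g (i,j,k) * x^i * (y * (of_nat j * y^(j-1))) * z^k
          + g (i,j,k) * x^i * y^j * (z * (of_nat k * z^(k-1)))" by (simp add: algebra_simps)
      also have "\<dots> = g (i, j, k) * of_nat (i + j + k) * x ^ i * y ^ j * z ^ k"
        unfolding a b c by (simp add: algebra_simps)
      finally show ?thesis .
    qed
  qed
  also have "\<dots> = of_nat d * eval3 d g x y z"
    unfolding eval3_def sum_distrib_left by (rule sum.cong) (auto simp: algebra_simps)
  finally show ?thesis .
qed

lemma line_deriv:
  assumes "homog d g"
  shows "((\<lambda>t. eval3 d g (u1 + t*w1) (u2 + t*w2) (u3 + t*w3)) has_field_derivative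
    (w1 * eval3 (d-1) (pdx g) (u1 + t*w1) (u2 + t*w2) (u3 + t*w3) + w2 * eval3 (d-1) (pdy g) (u1 + t*w1) (u2 + t*w2) (u3 + t*w3)
     + w3 * eval3 (d-1) (pdz g) (u1 + t*w1) (u2 + t*w2) (u3 + t*w3))) (at t)"
proof -
  define X where "X = u1 + t*w1" define Y where "Y = u2 + t*w2" define Z where "Z = u3 + t*w3"
  have "((\<lambda>t. eval3 d g (u1 + t*w1) (u2 + t*w2) (u3 + t*w3)) has_field_derivative
     (\<Sum>(i,j,k)\<in>monoms d. g (i,j,k) * (w1 * of_nat i * X^(i-1) * Y^j * Z^k + w2 * of_nat j * X^i * Y^(j-1) * Z^k + w3 * of_nat k * X^i * Y^j * Z^(k-1)))) (at t)"
    unfolding eval3_def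
  proof (rule DERIV_sum, clarify)
    fix i j k
    show "((\<lambda>t. g (i,j,k) * (u1 + t*w1)^i * (u2 + t*w2)^j * (u3 + t*w3)^k) has_field_derivative
      g (i,j,k) * (w1 * of_nat i * X^(i-1) * Y^j * Z^k + w2 * of_nat j * X^i * Y^(j-1) * Z^k + w3 * of_nat k * X^i * Y^j * Z^(k-1))) (at t)"
    proof -
      have l1: "((\<lambda>t. u1 + t*w1) has_field_derivative w1) (at t)" by (auto intro!: derivative_eq_intros)
      have l2: "((\<lambda>t. u2 + t*w2) has_field_derivative w2) (at t)" by (auto intro!: derivative_eq_intros)
      have l3: "((\<lambda>t. u3 + t*w3) has_field_derivative w3) (at t)" by (auto intro!: derivative_eq_intros)
      have p1: "((\<lambda>t. (u1 + t*w1)^i) has_field_derivative of_nat i * (w1 * X^(i - Suc 0))) (at t)"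
        unfolding X_def by (rule DERIV_power[OF l1])
      have p2: "((\<lambda>t. (u2 + t*w2)^j) has_field_derivative of_nat j * (w2 * Y^(j - Suc 0))) (at t)"
        unfolding Y_def by (rule DERIV_power[OF l2])
      have p3: "((\<lambda>t. (u3 + t*w3)^k) has_field_derivative of_nat k * (w3 * Z^(k - Suc 0))) (at t)"
        unfolding Z_def by (rule DERIV_power[OF l3])
      have q1: "((\<lambda>t. g (i,j,k) * (u1 + t*w1)^i) has_field_derivative g (i,j,k) * (of_nat i * (w1 * X^(i - Suc 0)))) (at t)"
        by (rule DERIV_cmult[OF p1])
      note q2 = DERIV_mult[OF q1 p2]
      note q3 = DERIV_mult[OF q2 p3]
      show ?thesis
        by (rule DERIV_cong[OF q3]) (simp add: X_def Y_def Z_def algebra_simps)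
    qed
  qed
  also have "(\<Sum>(i,j,k)\<in>monoms d. g (i,j,k) * (w1 * of_nat i * X^(i-1) * Y^j * Z^k + w2 * of_nat j * X^i * Y^(j-1) * Z^k + w3 * of_nat k * X^i * Y^j * Z^(k-1)))
     = w1 * eval3 (d-1) (pdx g) X Y Z + w2 * eval3 (d-1) (pdy g) X Y Z + w3 * eval3 (d-1) (pdz g) X Y Z"
    unfolding pdx_eval[OF assms] pdy_eval[OF assms] pdz_eval[OF assms] sum_distrib_left sum.distrib[symmetric]
    by (rule sum.cong) (auto simp: algebra_simps)
  finally show ?thesis unfolding X_def Y_def Z_def .
qed


lemma sqfree_vanish:
  fixes f r :: "complex poly"
  assumes "f \<noteq> 0" "\<forall>x. poly f x = 0 \<longrightarrow> poly (pderiv f) x \<noteq> 0"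
    "\<forall>x. poly f x = 0 \<longrightarrow> poly r x = 0" "r = 0 \<or> degree r < degree f"
  shows "r = 0"
  using assms
proof (induction "degree f" arbitrary: f r rule: less_induct)
  case less
  show ?case
  proof (cases "degree f = 0")
    case True thus ?thesis using less.prems(4) by simp
  next
    case False
    have "\<not> constant (poly f)" using False constant_degree[of f] by simp
    then obtain a where a: "poly f a = 0"
      using fundamental_theorem_of_algebra[of f] by blast
    then obtain g where g: "f = [:-a,1:] * g" using poly_eq_0_iff_dvd by blast
    have g0: "g \<noteq> 0" using less.prems(1) g by auto
    have d1: "pderiv [:-a, 1:] = 1" by (simp add: pderiv_pCons)
    have pd: "pderiv f = g + [:-a,1:] * pderiv g" unfolding g pderiv_mult d1 by (simp only: mult_1_right add.commute)
    have ga: "poly g a \<noteq> 0" using less.prems(2) a pd by auto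
    show ?thesis
    proof (rule ccontr)
      assume r0: "r \<noteq> 0"
      have "poly r a = 0" using less.prems(3) a by blast
      then obtain r' where r': "r = [:-a,1:] * r'" using poly_eq_0_iff_dvd by blast
      have dg: "degree f = Suc (degree g)" unfolding g using g0 by (subst degree_mult_eq) auto
      have "r' \<noteq> 0" using r0 r' by auto
      hence dr: "degree r = Suc (degree r')" unfolding r' by (subst degree_mult_eq) auto
      have "r' = 0"
      proof (rule less.hyps[of g r'])
        show "degree g < degree f" using dg by simp
        show "g \<noteq> 0" by fact
        show "\<forall>x. poly g x = 0 \<longrightarrow> poly (pderiv g) x \<noteq> 0"
        proof (intro allI impI)
          fix x assume gx: "poly g x = 0"
          hence "poly f x = 0" unfolding g by simp
          hence "poly (pderiv f) x \<noteq> 0" using less.prems(2) by blast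
          thus "poly (pderiv g) x \<noteq> 0" using gx pd by simp
        qed
        show "\<forall>x. poly g x = 0 \<longrightarrow> poly r' x = 0"
        proof (intro allI impI)
          fix x assume gx: "poly g x = 0"
          hence "poly f x = 0" unfolding g by simp
          hence "poly r x = 0" using less.prems(3) by blast
          moreover have "x \<noteq> a" using gx ga by auto
          ultimately show "poly r' x = 0" unfolding r' by simp
        qed
        show "r' = 0 \<or> degree r' < degree g" using less.prems(4) r0 dg dr by simp
      qed
      thus False using r0 r' by simp
    qed
  qed
qed

lemma degree_prod_mset_zero:
  fixes M :: "'a::idom poly multiset"
  assumes "\<forall>p\<in>#M. p \<noteq> 0 \<and> degree p = 0"
  shows "degree (prod_mset M) = 0"
  using assms
proof (induction M)
  case empty thus ?case by simp
next
  case (add x M)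
  have x: "x \<noteq> 0" "degree x = 0" using add.prems by auto
  have "\<forall>p\<in>#M. p \<noteq> 0 \<and> degree p = 0" using add.prems by auto
  hence M: "degree (prod_mset M) = 0" by (rule add.IH)
  have "prod_mset M \<noteq> 0"
  proof
    assume "prod_mset M = 0"
    hence "0 \<in># M" by (simp add: prod_mset_zero_iff)
    thus False using add.prems by auto
  qed
  hence "degree (x * prod_mset M) = degree x + degree (prod_mset M)" using x by (simp add: degree_mult_eq)
  thus ?case using x M by simp
qed

lemma prime_factor_pos_degree:
  fixes G :: P2
  assumes "G \<noteq> 0" "degree G > 0"
  shows "\<exists>P. prime P \<and> P dvd G \<and> degree P > 0"
proof (rule ccontr)
  assume nex: "\<not> ?thesis"
  have h: "\<forall>P\<in>#prime_factorization G. P \<noteq> 0 \<and> degree P = 0"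
  proof
    fix P assume P: "P \<in># prime_factorization G"
    have pr: "prime P" using P by (rule in_prime_factors_imp_prime)
    have dv: "P dvd G" using P by (rule in_prime_factors_imp_dvd)
    have "P \<noteq> 0" using pr by auto
    moreover have "degree P = 0" using nex pr dv by auto
    ultimately show "P \<noteq> 0 \<and> degree P = 0" by simp
  qed
  have "degree (prod_mset (prime_factorization G)) = 0" using h by (rule degree_prod_mset_zero)
  moreover have "normalize (prod_mset (prime_factorization G)) = normalize G"
    using assms(1) by (rule prod_mset_prime_factorization_weak)
  hence "degree (prod_mset (prime_factorization G)) = degree G" by (metis degree_normalize)
  ultimately show False using assms(2) by simp
qed


lemma evs_eqI: "(\<And>t. poly P t = poly Q t) \<Longrightarrow> P = (Q :: complex poly)"
  using poly_eq_poly_eq_iff[of P Q] by auto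

lemma evs_mult: "evs s (P * Q) = evs s P * evs s Q"
  by (rule evs_eqI) (simp add: poly_evs)
lemma evs_pow: "evs s (P ^ k) = evs s P ^ k"
  by (rule evs_eqI) (simp add: poly_evs)

lemma coeff_evs: "coeff (evs s P) k = poly (coeff P k) s"
  unfolding evs_def by (simp add: coeff_map_poly)

lemma degree_evs_le: "degree (evs s P) \<le> degree P"
  unfolding evs_def by (rule degree_map_poly_le)

lemma degree_evs: "poly (coeff P (degree P)) s \<noteq> 0 \<Longrightarrow> degree (evs s P) = degree P"
  by (metis coeff_evs degree_evs_le le_antisym le_degree)

lemma evs_pderiv: "evs s (pderiv P) = pderiv (evs s P)"
  by (rule poly_eqI) (simp add: coeff_evs coeff_pderiv)

lemma comm_ring_hom_poly: "comm_ring_hom (\<lambda>p::complex poly. poly p s)"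
  by (rule poly_hom.comm_ring_hom_axioms)

lemma resultant_evs:
  assumes "degree (evs s P) = degree P" "degree (evs s Q) = degree Q"
  shows "resultant (evs s P) (evs s Q) = poly (resultant P Q) s"
  unfolding evs_def
  by (rule comm_ring_hom.resultant_map_poly[OF comm_ring_hom_poly]) (use assms in \<open>simp_all add: evs_def\<close>)

lemma ev2_eq_poly_s: "ev2 P s t = poly (poly P [:t:]) s" by (simp add: ev2_def)

lemma deriv_link:
  assumes "homog d g" "\<forall>t. poly p t = eval3 d g (u1 + t*w1) (u2 + t*w2) (u3 + t*w3)"
  shows "poly (pderiv p) t = w1 * eval3 (d-1) (pdx g) (u1 + t*w1) (u2 + t*w2) (u3 + t*w3) + w2 * eval3 (d-1) (pdy g) (u1 + t*w1) (u2 + t*w2) (u3 + t*w3)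
     + w3 * eval3 (d-1) (pdz g) (u1 + t*w1) (u2 + t*w2) (u3 + t*w3)"
proof -
  have e: "poly p = (\<lambda>t. eval3 d g (u1 + t*w1) (u2 + t*w2) (u3 + t*w3))" using assms(2) by auto
  have "((\<lambda>t. eval3 d g (u1 + t*w1) (u2 + t*w2) (u3 + t*w3)) has_field_derivative poly (pderiv p) t) (at t)"
    using poly_DERIV[of p t] unfolding e .
  from DERIV_unique[OF this line_deriv[OF assms(1)]] show ?thesis .
qed

lemma pderiv_sq_root:
  fixes p h :: "complex poly"
  assumes "poly p x = 0"
  shows "poly (pderiv (p^2 * h)) x = 0"
  using assms by (simp add: pderiv_mult pderiv_power_Suc numeral_2_eq_2)



lemma cc_add: "cc (P + Q) i k = cc P i k + cc Q i k" by (simp add: cc_def)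
lemma cc_smult: "cc (smult [:c:] P) i k = c * cc P i k" by (simp add: cc_def)

lemma TB_quot:
  assumes tb: "TB m (P * Q)" "TB n P" and c: "cc P 0 n \<noteq> 0"
  shows "\<forall>i k. cc Q i k \<noteq> 0 \<longrightarrow> i + k + n \<le> m"
proof (cases "Q = 0")
  case True thus ?thesis by (simp add: cc_def)
next
  case False
  define SQ where "SQ = {(i,k). cc Q i k \<noteq> 0}"
  define N where "N = Max ((\<lambda>k. degree (coeff Q k)) ` {..degree Q})"
  have "SQ \<subseteq> {..N} \<times> {..degree Q}"
  proof (clarify)
    fix i k assume "(i,k) \<in> SQ"
    hence nz: "coeff (coeff Q k) i \<noteq> 0" by (simp add: SQ_def cc_def)
    hence "coeff Q k \<noteq> 0" by auto
    hence k: "k \<le> degree Q" by (rule le_degree)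
    have "i \<le> degree (coeff Q k)" using nz by (rule le_degree)
    also have "\<dots> \<le> N" unfolding N_def using k by (intro Max_ge) auto
    finally show "i \<in> {..N} \<and> k \<in> {..degree Q}" using k by simp
  qed
  hence fin: "finite SQ" by (rule finite_subset) auto
  show ?thesis
  proof (cases "SQ = {}")
    case True thus ?thesis by (auto simp: SQ_def)
  next
    case ne: False
    define D where "D = Max ((\<lambda>(i,k). i + k) ` SQ)"
    have Dge: "i + k \<le> D" if "(i,k) \<in> SQ" for i k
      unfolding D_def using fin that by (intro Max_ge) auto
    have "D \<in> (\<lambda>(i,k). i + k) ` SQ" unfolding D_def using fin ne by (intro Max_in) auto
    hence neD: "{(i,k)\<in>SQ. i + k = D} \<noteq> {}" by auto
    have finD: "finite {(i,k)\<in>SQ. i + k = D}" by (rule finite_subset[OF _ fin]) auto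
    define K where "K = Max (snd ` {(i,k)\<in>SQ. i + k = D})"
    have "K \<in> snd ` {(i,k)\<in>SQ. i + k = D}" unfolding K_def using finD neD by (intro Max_in) auto
    then obtain i0 where i0: "(i0,K) \<in> SQ" "i0 + K = D" by auto
    have Kge: "k \<le> K" if "(i,k) \<in> SQ" "i + k = D" for i k
      unfolding K_def using finD that by (intro Max_ge) force+
    have "cc (P * Q) i0 (K + n) = (\<Sum>k1\<le>K+n. \<Sum>i1\<le>i0. cc P i1 k1 * cc Q (i0 - i1) (K + n - k1))"
      by (rule cc_mult)
    also have "\<dots> = (\<Sum>k1\<le>K+n. if k1 = n then cc P 0 n * cc Q i0 K else 0)"
    proof (rule sum.cong[OF refl])
      fix k1 assume k1: "k1 \<in> {..K+n}"
      show "(\<Sum>i1\<le>i0. cc P i1 k1 * cc Q (i0 - i1) (K + n - k1)) = (if k1 = n then cc P 0 n * cc Q i0 K else 0)"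
      proof (subst sum_single[of 0])
        fix i1 :: nat assume i1: "i1 \<noteq> 0"
        show "cc P i1 k1 * cc Q (i0 - i1) (K + n - k1) = 0"
        proof (rule ccontr)
          assume "cc P i1 k1 * cc Q (i0 - i1) (K + n - k1) \<noteq> 0"
          hence a: "cc P i1 k1 \<noteq> 0" and b: "(i0 - i1, K + n - k1) \<in> SQ" by (auto simp: SQ_def)
          have "i1 + k1 \<le> n" using a tb(2) by (auto simp: TB_def)
          moreover have "(i0 - i1) + (K + n - k1) \<le> D" using Dge[OF b] .
          ultimately have "i1 \<le> i0 \<Longrightarrow> False"
          proof -
            assume le: "i1 \<le> i0"
            assume h1: "i1 + k1 \<le> n" and h2: "(i0 - i1) + (K + n - k1) \<le> D"
            have kk: "k1 \<le> K + n" using k1 by simp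
            have e1: "(i0 - i1) + (K + n - k1) = D" using h1 h2 le kk i0(2) by arith
            have "K + n - k1 \<le> K" using Kge[OF b e1] .
            thus False using h1 i1 kk by arith
          qed
          moreover have "i1 > i0 \<Longrightarrow> False"
          proof -
            assume "i1 > i0"
            hence "(0, K + n - k1) \<in> SQ" using b by simp
            hence "K + n - k1 \<le> D" using Dge by fastforce
            moreover have "i1 + k1 \<le> n" by fact
            ultimately show False using i0(2) \<open>i1 > i0\<close> Kge[of 0 "K + n - k1"] \<open>(0, K + n - k1) \<in> SQ\<close> k1 by auto
          qed
          ultimately show False by linarith
        qed
      next
        show "(if 0 \<le> i0 then cc P 0 k1 * cc Q (i0 - 0) (K + n - k1) else 0) = (if k1 = n then cc P 0 n * cc Q i0 K else 0)"
        proof (cases "k1 = n")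
          case False
          show ?thesis
          proof (rule ccontr)
            assume "\<not> ?thesis"
            hence a: "cc P 0 k1 \<noteq> 0" and b: "(i0, K + n - k1) \<in> SQ" using False by (auto simp: SQ_def)
            have "0 + k1 \<le> n" using a tb(2) unfolding TB_def by blast
            hence "k1 \<le> n" by simp
            hence "k1 < n" using False by simp
            hence "i0 + (K + n - k1) > D" using i0(2) by simp
            thus False using Dge[OF b] by simp
          qed
        qed simp
      qed
    qed
    also have "\<dots> = cc P 0 n * cc Q i0 K" by (subst sum_single[of n]) auto
    finally have "cc (P * Q) i0 (K + n) \<noteq> 0" using c i0(1) by (simp add: SQ_def)
    hence "i0 + (K + n) \<le> m" using tb(1) by (auto simp: TB_def)
    hence "D + n \<le> m" using i0(2) by simp
    thus ?thesis using Dge unfolding SQ_def by fastforce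
  qed
qed

lemma eval3_add: "eval3 d (f + g) x y z = eval3 d f x y z + eval3 d g x y z"
  unfolding eval3_def sum.distrib[symmetric] by (rule sum.cong) (auto simp: algebra_simps)
lemma eval3_cscale: "eval3 d (cscale c f) x y z = c * eval3 d f x y z"
  unfolding eval3_def sum_distrib_left by (rule sum.cong) (auto simp: algebra_simps cscale_def)

definition Zs :: "nat \<Rightarrow> poly3 \<Rightarrow> nat \<Rightarrow> poly3 set" where
  "Zs n F m = {g. homog m g \<and> (\<forall>x y z. (x,y,z) \<noteq> (0,0,0) \<and> eval3 n F x y z = 0 \<longrightarrow> eval3 m g x y z = 0)}"

lemma Zs_subspace: "cs.subspace (Zs n F m)"
  unfolding cs.subspace_def Zs_def
  by (auto simp: homog_add homog_scale homog_0 eval3_add eval3_cscale) (simp_all add: eval3_def)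

context
  fixes n :: nat and F :: poly3 and a b :: complex
  assumes n2: "n \<ge> 2" and sm: "smooth_curve_poly n F" and c0: "eval3 n F a b 1 \<noteq> 0"
begin

abbreviation Phi where "Phi \<equiv> Gam a b n F"

lemma hF: "homog n F" using sm by (simp add: smooth_curve_poly_def)

lemma Phi_deg: "degree Phi = n" "coeff Phi n = [:eval3 n F a b 1:]"
proof -
  have t: "degree Phi \<le> n" "coeff Phi n = [:eval3 n F a b 1:]" using Gam_top by auto
  hence "coeff Phi n \<noteq> 0" using c0 by simp
  hence "n \<le> degree Phi" by (rule le_degree)
  thus "degree Phi = n" using t by simp
  show "coeff Phi n = [:eval3 n F a b 1:]" by fact
qed

lemma Phi_ne: "Phi \<noteq> 0" using Phi_deg c0 by auto

lemma res_nonzero: "resultant Phi (pderiv Phi) \<noteq> 0"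
proof
  assume "resultant Phi (pderiv Phi) = 0"
  hence dg: "degree (gcd Phi (pderiv Phi)) \<noteq> 0" using resultant_0_gcd by blast
  define G where "G = gcd Phi (pderiv Phi)"
  have G0: "G \<noteq> 0" using Phi_ne by (simp add: G_def)
  obtain P where P: "prime P" "P dvd G" "degree P > 0"
    using prime_factor_pos_degree[OF G0] dg G_def by auto
  have P1: "P dvd Phi" using P(2) unfolding G_def by (meson dvd_trans gcd_dvd1)
  have P2: "P dvd pderiv Phi" using P(2) unfolding G_def by (meson dvd_trans gcd_dvd2)
  obtain H where H: "Phi = P * H" using P1 by (elim dvdE)
  have "pderiv Phi = P * pderiv H + H * pderiv P" unfolding H by (rule pderiv_mult)
  hence "H * pderiv P = pderiv Phi - P * pderiv H" by simp
  hence "P dvd H * pderiv P" using P2 by (simp add: dvd_diff)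
  hence "P dvd H \<or> P dvd pderiv P" using P(1) prime_dvd_mult_iff by blast
  moreover have "\<not> P dvd pderiv P" using P(3) dvd_pderiv_iff by simp
  ultimately obtain H2 where H2: "H = P * H2" by (auto elim: dvdE)
  have PhiP: "Phi = P^2 * H2" unfolding H H2 by (simp add: power2_eq_square algebra_simps)
  have "P \<noteq> 0" using P(1) by auto
  hence "lead_coeff P \<noteq> 0" by simp
  then obtain s0 where s0: "poly (lead_coeff P) s0 \<noteq> 0" using poly_all_0_iff_0 by blast
  have "degree (evs s0 P) = degree P" using s0 by (rule degree_evs)
  hence "\<not> constant (poly (evs s0 P))" using P(3) constant_degree[of "evs s0 P"] by simp
  then obtain t0 where t0: "poly (evs s0 P) t0 = 0" using fundamental_theorem_of_algebra by blast
  hence Pz: "ev2 P s0 t0 = 0" by (simp add: poly_evs)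
  define X where "X = 1 + a*t0"
  define Y where "Y = s0 + b*t0"
  define Z where "Z = t0"
  have Fv: "eval3 n F X Y Z = 0"
  proof -
    have "eval3 n F X Y Z = ev2 Phi s0 t0" by (simp add: ev2_Gam X_def Y_def Z_def)
    also have "\<dots> = 0" unfolding PhiP using Pz by (simp add: power2_eq_square)
    finally show ?thesis .
  qed
  have dt: "a * eval3 (n-1) (pdx F) X Y Z + b * eval3 (n-1) (pdy F) X Y Z + 1 * eval3 (n-1) (pdz F) X Y Z = 0"
  proof -
    have "\<forall>t. poly (evs s0 Phi) t = eval3 n F (1 + t*a) (s0 + t*b) (0 + t*1)"
      by (simp add: poly_evs ev2_Gam algebra_simps)
    from deriv_link[OF hF this, of t0]
    have "poly (pderiv (evs s0 Phi)) t0 = a * eval3 (n-1) (pdx F) X Y Z + b * eval3 (n-1) (pdy F) X Y Z + 1 * eval3 (n-1) (pdz F) X Y Z"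
      by (simp add: X_def Y_def Z_def algebra_simps)
    moreover have "evs s0 Phi = (evs s0 P)^2 * evs s0 H2" unfolding PhiP by (simp add: evs_mult evs_pow)
    hence "poly (pderiv (evs s0 Phi)) t0 = 0" using pderiv_sq_root[OF t0] by simp
    ultimately show ?thesis by simp
  qed
  have ds: "eval3 (n-1) (pdy F) X Y Z = 0"
  proof -
    define psi where "psi = poly Phi [:t0:]"
    have "\<forall>s. poly psi s = eval3 n F ((1 + a*t0) + s*0) ((b*t0) + s*1) (t0 + s*0)"
      by (simp add: psi_def ev2_eq_poly_s[symmetric] ev2_Gam algebra_simps)
    from deriv_link[OF hF this, of s0]
    have "poly (pderiv psi) s0 = 0 * eval3 (n-1) (pdx F) X Y Z + 1 * eval3 (n-1) (pdy F) X Y Z + 0 * eval3 (n-1) (pdz F) X Y Z"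
      by (simp add: X_def Y_def Z_def algebra_simps)
    moreover have "psi = (poly P [:t0:])^2 * poly H2 [:t0:]" unfolding psi_def PhiP by (simp add: poly_power)
    moreover have "poly (poly P [:t0:]) s0 = 0" using Pz by (simp add: ev2_def)
    ultimately show ?thesis using pderiv_sq_root by simp
  qed
  have eu: "X * eval3 (n-1) (pdx F) X Y Z + Y * eval3 (n-1) (pdy F) X Y Z + Z * eval3 (n-1) (pdz F) X Y Z = 0"
    using euler[OF hF, of X Y Z] Fv by simp
  have fx: "eval3 (n-1) (pdx F) X Y Z = 0"
  proof -
    have "eval3 (n-1) (pdx F) X Y Z = X * eval3 (n-1) (pdx F) X Y Z + Y * eval3 (n-1) (pdy F) X Y Z + Z * eval3 (n-1) (pdz F) X Y Z
       - t0 * (a * eval3 (n-1) (pdx F) X Y Z + b * eval3 (n-1) (pdy F) X Y Z + 1 * eval3 (n-1) (pdz F) X Y Z)"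
      using ds by (simp add: X_def Z_def algebra_simps)
    thus ?thesis using eu dt by simp
  qed
  have fz: "eval3 (n-1) (pdz F) X Y Z = 0" using dt ds fx by simp
  have "(X,Y,Z) \<noteq> (0,0,0)" by (auto simp: X_def Z_def)
  thus False using sm Fv fx ds fz unfolding smooth_curve_poly_def by blast
qed


lemma rem_zero:
  assumes "\<forall>s t. ev2 Phi s t = 0 \<longrightarrow> ev2 r s t = 0" "r = 0 \<or> degree r < n"
  shows "r = 0"
proof -
  define D where "D = resultant Phi (pderiv Phi)"
  have D0: "D \<noteq> 0" using res_nonzero by (simp add: D_def)
  have good: "evs s r = 0" if sD: "poly D s \<noteq> 0" for s
  proof -
    define f where "f = evs s Phi"
    have cn: "coeff Phi (degree Phi) = [:eval3 n F a b 1:]" using Phi_deg by simp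
    have df: "degree f = n" unfolding f_def using degree_evs[of Phi s] cn c0 Phi_deg by simp
    have f0: "f \<noteq> 0" using df n2 by auto
    have dp: "degree (pderiv Phi) = n - 1" using Phi_deg by (simp add: degree_pderiv)
    have cp: "coeff (pderiv Phi) (degree (pderiv Phi)) = [:of_nat n * eval3 n F a b 1:]"
      using dp Phi_deg n2 by (simp add: coeff_pderiv of_nat_poly mult.commute)
    have "poly (coeff (pderiv Phi) (degree (pderiv Phi))) s \<noteq> 0" using cp c0 n2 by simp
    hence dpe: "degree (evs s (pderiv Phi)) = degree (pderiv Phi)" by (rule degree_evs)
    have "degree (evs s Phi) = degree Phi" using degree_evs[of Phi s] cn c0 by simp
    hence "resultant f (pderiv f) = poly D s"
      unfolding f_def D_def evs_pderiv[symmetric] using dpe by (rule resultant_evs)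
    hence "resultant f (pderiv f) \<noteq> 0" using sD by simp
    hence dg: "degree (gcd f (pderiv f)) = 0" using resultant_0_gcd by blast
    have nr: "\<forall>x. poly f x = 0 \<longrightarrow> poly (pderiv f) x \<noteq> 0"
    proof (intro allI impI notI)
      fix x assume "poly f x = 0" "poly (pderiv f) x = 0"
      hence "[:-x,1:] dvd f" "[:-x,1:] dvd pderiv f" by (simp_all add: poly_eq_0_iff_dvd)
      hence "[:-x,1:] dvd gcd f (pderiv f)" by simp
      moreover have "gcd f (pderiv f) \<noteq> 0" using f0 by simp
      ultimately have "degree [:-x,1:] \<le> degree (gcd f (pderiv f))" by (rule dvd_imp_degree_le)
      thus False using dg by simp
    qed
    show "evs s r = 0"
    proof (rule sqfree_vanish[OF f0 nr])
      show "\<forall>x. poly f x = 0 \<longrightarrow> poly (evs s r) x = 0" using assms(1) by (simp add: f_def poly_evs)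
      show "evs s r = 0 \<or> degree (evs s r) < degree f"
        using assms(2) degree_evs_le[of s r] df by (auto simp: evs_def)
    qed
  qed
  have "coeff r k = 0" for k
  proof (rule ccontr)
    assume nz: "coeff r k \<noteq> 0"
    have "{s. poly D s \<noteq> 0} \<subseteq> {s. poly (coeff r k) s = 0}"
      using good by (auto simp: coeff_evs[symmetric])
    moreover have "infinite {s. poly D s \<noteq> 0}"
    proof -
      have "{s. poly D s \<noteq> 0} = UNIV - {s. poly D s = 0}" by auto
      thus ?thesis using poly_roots_finite[OF D0] by (simp add: infinite_UNIV_char_0)
    qed
    ultimately have "infinite {s. poly (coeff r k) s = 0}" using finite_subset by blast
    thus False using poly_roots_finite[OF nz] by simp
  qed
  thus "r = 0" by (simp add: poly_eqI)
qed

lemma Phi_divides: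
  assumes "homog m g" "\<forall>x y z. (x,y,z) \<noteq> (0,0,0) \<and> eval3 n F x y z = 0 \<longrightarrow> eval3 m g x y z = 0"
  shows "\<exists>Q. Gam a b m g = Phi * Q"
proof -
  obtain q r where qr: "pseudo_divmod (Gam a b m g) Phi = (q, r)" by (metis surj_pair)
  define e where "e = Suc (degree (Gam a b m g)) - degree Phi"
  define c where "c = eval3 n F a b 1"
  have cn: "coeff Phi (degree Phi) = [:c:]" using Phi_deg by (simp add: c_def)
  have eq: "smult ([:c:]^e) (Gam a b m g) = Phi * q + r" and rr: "r = 0 \<or> degree r < degree Phi"
    using pseudo_divmod[OF Phi_ne qr] cn by (simp_all add: e_def)
  have "r = 0"
  proof (rule rem_zero)
    show "r = 0 \<or> degree r < n" using rr Phi_deg by simp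
    show "\<forall>s t. ev2 Phi s t = 0 \<longrightarrow> ev2 r s t = 0"
    proof (intro allI impI)
      fix s t assume z: "ev2 Phi s t = 0"
      hence "eval3 n F (1 + a*t) (s + b*t) t = 0" by (simp add: ev2_Gam)
      moreover have "(1 + a*t, s + b*t, t) \<noteq> (0,0,0)" by auto
      ultimately have "eval3 m g (1 + a*t) (s + b*t) t = 0" using assms(2) by blast
      hence "ev2 (Gam a b m g) s t = 0" by (simp add: ev2_Gam)
      have "r = smult ([:c:]^e) (Gam a b m g) - Phi * q" using eq by simp
      hence "ev2 r s t = poly ([:c:]^e) s * ev2 (Gam a b m g) s t - ev2 Phi s t * ev2 q s t"
        by (simp add: ev2_def)
      thus "ev2 r s t = 0" using z \<open>ev2 (Gam a b m g) s t = 0\<close> by simp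
    qed
  qed
  hence eq2: "smult [:c^e:] (Gam a b m g) = Phi * q" using eq by (simp add: poly_const_pow)
  have "c \<noteq> 0" using c0 by (simp add: c_def)
  have "Gam a b m g = smult [:1/c^e:] (smult [:c^e:] (Gam a b m g))"
    using \<open>c \<noteq> 0\<close> by simp
  also have "\<dots> = Phi * smult [:1/c^e:] q" unfolding eq2 by simp
  finally show ?thesis by blast
qed

lemma cc_Phi: "cc Phi 0 n = eval3 n F a b 1"
  using Phi_deg by (simp add: cc_def)

lemma dim_Z_le: "cs.dim (Zs n F m) \<le> (if n \<le> m then card (monoms (m-n)) else 0)"
proof -
  let ?Z = "Zs n F m"
  define Qof where "Qof g = (SOME Q. Gam a b m g = Phi * Q)" for g
  have Qof: "Gam a b m g = Phi * Qof g" if "g \<in> ?Z" for g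
  proof -
    have "\<exists>Q. Gam a b m g = Phi * Q" using that by (intro Phi_divides) (auto simp: Zs_def)
    thus ?thesis unfolding Qof_def by (rule someI_ex)
  qed
  have canc: "Q1 = Q2" if "Phi * Q1 = Phi * Q2" for Q1 Q2 using that Phi_ne by simp
  have supp: "\<forall>i k. cc (Qof g) i k \<noteq> 0 \<longrightarrow> i + k + n \<le> m" if "g \<in> ?Z" for g
  proof (rule TB_quot)
    show "TB m (Phi * Qof g)" using TB_Gam[of m a b g] Qof[OF that] by simp
    show "TB n Phi" by (rule TB_Gam)
    show "cc Phi 0 n \<noteq> 0" using cc_Phi c0 by simp
  qed
  define E where "E = {(i,k,l). n \<le> m \<and> i + k + l + n = m}"
  have Ecard: "card E = (if n \<le> m then card (monoms (m-n)) else 0)"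
  proof (cases "n \<le> m")
    case True
    hence "E = monoms (m-n)" by (auto simp: E_def monoms_def)
    thus ?thesis using True by simp
  next
    case False
    hence "E = {}" by (auto simp: E_def)
    thus ?thesis using False by simp
  qed
  have Efin: "finite E"
  proof (cases "n \<le> m")
    case True
    hence "E = monoms (m-n)" by (auto simp: E_def monoms_def)
    thus ?thesis by simp
  next
    case False
    hence "E = {}" by (auto simp: E_def)
    thus ?thesis by simp
  qed
  define h where "h g = (\<lambda>(i,k,l). if (i,k,l) \<in> E then cc (Qof g) i k else 0)" for g
  have Zspan: "?Z \<subseteq> cs.span (delta ` monoms m)" using Rm_span by (auto simp: Zs_def Rm_def)
  have "cs.dim ?Z \<le> card E"
  proof (rule dim_le_inj[OF Zs_subspace Zspan _ _ _ _ _ Efin])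
    show "finite (delta ` monoms m)" by simp
    have qadd: "Qof (x + y) = Qof x + Qof y" if "x \<in> ?Z" "y \<in> ?Z" for x y
    proof (rule canc)
      have "x + y \<in> ?Z" using that Zs_subspace cs.subspace_add by blast
      hence "Phi * Qof (x + y) = Gam a b m (x + y)" using Qof by simp
      also have "\<dots> = Gam a b m x + Gam a b m y" by (rule Gam_add)
      also have "\<dots> = Phi * (Qof x + Qof y)" using Qof that by (simp add: distrib_left)
      finally show "Phi * Qof (x + y) = Phi * (Qof x + Qof y)" .
    qed
    have qsc: "Qof (cscale c x) = smult [:c:] (Qof x)" if "x \<in> ?Z" for x c
    proof (rule canc)
      have "cscale c x \<in> ?Z" using that Zs_subspace cs.subspace_scale by blast
      hence "Phi * Qof (cscale c x) = Gam a b m (cscale c x)" using Qof by simp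
      also have "\<dots> = smult [:c:] (Gam a b m x)" by (rule Gam_scale)
      also have "\<dots> = Phi * smult [:c:] (Qof x)" using Qof that by simp
      finally show "Phi * Qof (cscale c x) = Phi * smult [:c:] (Qof x)" .
    qed
    show "\<forall>x\<in>?Z. \<forall>y\<in>?Z. h (x + y) = h x + h y"
      using qadd by (auto simp: h_def fun_eq_iff cc_add)
    show "\<forall>x\<in>?Z. \<forall>c. h (cscale c x) = cscale c (h x)"
      using qsc by (auto simp: h_def fun_eq_iff cc_smult cscale_def)
    show "h ` ?Z \<subseteq> {f. supp_in E f}" by (auto simp: h_def supp_in_def)
    show "inj_on h ?Z"
    proof (rule inj_onI)
      fix x y assume x: "x \<in> ?Z" and y: "y \<in> ?Z" and hxy: "h x = h y"
      have "cc (Qof x) i k = cc (Qof y) i k" for i k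
      proof (cases "cc (Qof x) i k = 0 \<and> cc (Qof y) i k = 0")
        case False
        hence "i + k + n \<le> m" using supp[OF x] supp[OF y] by blast
        hence "(i,k,m - n - i - k) \<in> E" by (auto simp: E_def)
        thus ?thesis using fun_cong[OF hxy, of "(i,k,m-n-i-k)"] by (simp add: h_def)
      qed simp
      hence "Qof x = Qof y" by (intro poly_eqI) (simp add: cc_def)
      hence "Gam a b m x = Gam a b m y" using Qof x y by simp
      hence eqg: "Gam a b m x = Gam a b m y" .
      have "Gam a b m (x + cscale (-1) y) = Gam a b m x + smult [:-1:] (Gam a b m y)" by (simp only: Gam_add Gam_scale)
      also have "\<dots> = 0" unfolding eqg by (rule poly_eqI) (simp add: coeff_smult)
      finally have "Gam a b m (x + cscale (-1) y) = 0" .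
      moreover have "homog m x" "homog m y" using x y by (auto simp: Zs_def)
      hence "homog m (x + cscale (-1) y)" by (intro homog_add homog_scale)
      ultimately have "x + cscale (-1) y = (\<lambda>_. 0)" using Gam_inj by blast
      thus "x = y" by (auto simp: fun_eq_iff cscale_def dest: fun_cong)
    qed
  qed
  thus ?thesis using Ecard by simp
qed
end


definition ZP :: "nat \<Rightarrow> poly3 \<Rightarrow> complex \<Rightarrow> complex \<Rightarrow> complex poly" where
  "ZP d g x y = (\<Sum>(i,j,k)\<in>monoms d. smult (g (i,j,k) * x^i * y^j) (monom 1 k))"

lemma poly_ZP: "poly (ZP d g x y) z = eval3 d g x y z"
  unfolding ZP_def eval3_def poly_sum
  by (rule sum.cong) (auto simp: poly_monom algebra_simps)

lemma exists_ab:
  assumes "homog n F" "F \<noteq> (\<lambda>_. 0)"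
  shows "\<exists>a b. eval3 n F a b 1 \<noteq> 0"
proof (rule ccontr)
  assume "\<not> ?thesis"
  hence h: "\<forall>a b. eval3 n F a b 1 = 0" by blast
  have off: "eval3 n F x y z = 0" if "z \<noteq> 0" for x y z
  proof -
    have "eval3 n F x y z = eval3 n F (z * (x/z)) (z * (y/z)) (z * 1)" using that by simp
    also have "\<dots> = z^n * eval3 n F (x/z) (y/z) 1" by (rule eval3_scale)
    finally show ?thesis using h by simp
  qed
  have "\<forall>x y z. eval3 n F x y z = 0"
  proof (intro allI)
    fix x y z
    have "{z'::complex. z' \<noteq> 0} \<subseteq> {z'. poly (ZP n F x y) z' = 0}" using off by (auto simp: poly_ZP)
    moreover have "infinite {z'::complex. z' \<noteq> 0}"
    proof -
      have "{z'::complex. z' \<noteq> 0} = UNIV - {0}" by auto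
      thus ?thesis by (simp add: infinite_UNIV_char_0)
    qed
    ultimately have "infinite {z'. poly (ZP n F x y) z' = 0}" using finite_subset by blast
    hence "ZP n F x y = 0" using poly_roots_finite by blast
    thus "eval3 n F x y z = 0" using poly_ZP[of n F x y z] by simp
  qed
  hence "F = (\<lambda>_. 0)" by (rule eval3_zero_coeffs[OF assms(1)])
  thus False using assms(2) by simp
qed

lemma dim_mono_fin:
  assumes "A \<subseteq> C" "C \<subseteq> cs.span W" "finite W"
  shows "cs.dim A \<le> cs.dim C"
proof -
  obtain BA where BA: "BA \<subseteq> A" "cs.independent BA" "A \<subseteq> cs.span BA" "card BA = cs.dim A"
    using cs.basis_exists by blast
  obtain BC where BC: "BC \<subseteq> C" "cs.independent BC" "C \<subseteq> cs.span BC" "card BC = cs.dim C"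
    using cs.basis_exists by blast
  have "BC \<subseteq> cs.span W" using BC assms by blast
  hence fBC: "finite BC" using cs.independent_span_bound[OF assms(3) BC(2)] by blast
  have "BA \<subseteq> cs.span BC" using BA BC assms by blast
  hence "card BA \<le> card BC" using cs.independent_span_bound[OF fBC BA(2)] by blast
  thus ?thesis using BA BC by simp
qed

lemma homog_ppow: "homog m (ppow (linform \<xi> \<eta> \<zeta>) m)"
  unfolding homog_def by (auto simp: ppow_linform split: if_splits)

theorem mainTheorem2:
  fixes n m :: nat and F :: poly3
  assumes "n \<ge> 2" and "smooth_curve_poly n F"
  shows "vector_space.dim cscale (S_space n F m) = r_num n m \<and>
    (\<exists>\<xi> \<eta> \<zeta> :: nat \<Rightarrow> complex.
       (\<forall>i < r_num n m. (\<xi> i, \<eta> i, \<zeta> i) \<noteq> (0,0,0) \<and> eval3 n F (\<xi> i) (\<eta> i) (\<zeta> i) = 0) \<and>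
       inj_on (\<lambda>i. ppow (linform (\<xi> i) (\<eta> i) (\<zeta> i)) m) {..<r_num n m} \<and>
       \<not> module.dependent cscale ((\<lambda>i. ppow (linform (\<xi> i) (\<eta> i) (\<zeta> i)) m) ` {..<r_num n m}) \<and>
       module.span cscale ((\<lambda>i. ppow (linform (\<xi> i) (\<eta> i) (\<zeta> i)) m) ` {..<r_num n m})
         = S_space n F m)"
proof -
  have hF: "homog n F" and F0: "F \<noteq> (\<lambda>_. 0)" using assms(2) by (auto simp: smooth_curve_poly_def)
  obtain a b where ab: "eval3 n F a b 1 \<noteq> 0" using exists_ab[OF hF F0] by blast
  define N where "N = card (monoms m)"
  define k where "k = (if n \<le> m then card (monoms (m-n)) else 0)"
  have rN: "r_num n m = N - k" unfolding N_def k_def r_num_eq[OF assms(1)] card_monoms by simp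
  let ?S = "S_space n F m"
  have dS: "cs.dim ?S \<le> N - k" unfolding N_def k_def by (rule dim_S_le[OF hF F0])
  have dZ: "cs.dim (Zs n F m) \<le> k" unfolding k_def by (rule dim_Z_le[OF assms(1,2) ab])
  define G where "G = {ppow (linform \<xi> \<eta> \<zeta>) m | \<xi> \<eta> \<zeta>. (\<xi>,\<eta>,\<zeta>) \<noteq> (0,0,0) \<and> eval3 n F \<xi> \<eta> \<zeta> = 0}"
  have GS: "G \<subseteq> ?S" unfolding G_def S_space_def using ppow_in_S homog_ppow by blast
  have W: "?S \<subseteq> cs.span (delta ` monoms m)" using Rm_span by (auto simp: S_space_def Rm_def)
  obtain B where B: "B \<subseteq> G" "cs.independent B" "G \<subseteq> cs.span B"
    using cs.maximal_independent_subset by blast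
  have fB: "finite B" using cs.independent_span_bound[OF _ B(2), of "delta ` monoms m"] B(1) GS W by auto
  have BS: "B \<subseteq> ?S" using B GS by blast
  define K where "K = {v\<in>Rm m. \<forall>t\<in>B. pr m v t = 0}"
  have "cs.dim (Rm m) \<le> cs.dim K + card B"
    unfolding K_def
    by (rule dim_ker_many[OF Rm_subspace Rm_span _ fB]) (auto simp: pr_add1 pr_scale1)
  moreover have "K \<subseteq> Zs n F m"
  proof
    fix v assume v: "v \<in> K"
    have "eval3 m v x y z = 0" if p: "(x,y,z) \<noteq> (0,0,0)" "eval3 n F x y z = 0" for x y z
    proof -
      have "ppow (linform x y z) m \<in> G" using p unfolding G_def by blast
      hence "ppow (linform x y z) m \<in> cs.span B" using B(3) by blast
      hence "pr m v (ppow (linform x y z) m) = 0" using v pr_span_zero[of B m v] by (auto simp: K_def)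
      thus ?thesis by (simp add: pr_ppow)
    qed
    thus "v \<in> Zs n F m" using v by (auto simp: K_def Rm_def Zs_def)
  qed
  hence "cs.dim K \<le> cs.dim (Zs n F m)"
    by (rule dim_mono_fin) (use Rm_span in \<open>auto simp: Zs_def Rm_def\<close>)
  ultimately have low: "N \<le> k + card B" using dim_Rm[of m] dZ N_def by simp
  have cB: "card B \<le> cs.dim ?S"
  proof -
    have "cs.dim B = card B" using B(2) by (rule cs.dim_eq_card_independent)
    moreover have "cs.dim B \<le> cs.dim ?S" using BS W by (rule dim_mono_fin) simp
    ultimately show ?thesis by simp
  qed
  have kN: "k \<le> N"
  proof (cases "n \<le> m")
    case True
    have "(m - n + 2) * (m - n + 2 - 1) \<le> (m + 2) * (m + 2 - 1)" by (rule mult_le_mono) auto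
    hence "card (monoms (m-n)) \<le> card (monoms m)" unfolding card_monoms choose_two by (rule div_le_mono)
    thus ?thesis using True by (simp add: k_def N_def)
  qed (simp add: k_def)
  have dimS: "cs.dim ?S = N - k" and cardB: "card B = N - k" using dS low cB kN by linarith+
  have spanB: "cs.span B = ?S"
  proof
    show "cs.span B \<subseteq> ?S" using BS S_subspace by (rule cs.span_minimal)
    show "?S \<subseteq> cs.span B"
    proof
      fix phi assume phi: "phi \<in> ?S"
      show "phi \<in> cs.span B"
      proof (rule ccontr)
        assume nphi: "phi \<notin> cs.span B"
        hence ind: "cs.independent (insert phi B)" using B(2) by (rule cs.independent_insertI)
        have "phi \<notin> B" using nphi cs.span_base by blast
        hence "card (insert phi B) = Suc (card B)" using fB by simp
        moreover have "cs.dim (insert phi B) = card (insert phi B)" using ind by (rule cs.dim_eq_card_independent)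
        moreover have "cs.dim (insert phi B) \<le> cs.dim ?S" using BS phi W by (intro dim_mono_fin) auto
        ultimately show False using dimS cardB by simp
      qed
    qed
  qed
  obtain f where f: "bij_betw f {0..<card B} B" using ex_bij_betw_nat_finite[OF fB] by blast
  have "{0..<card B} = {..<r_num n m}" using cardB rN by auto
  hence f': "bij_betw f {..<r_num n m} B" using f by simp
  define pt where "pt i = (SOME p. f i = ppow (linform (fst p) (fst (snd p)) (snd (snd p))) m \<and> (fst p, fst (snd p), snd (snd p)) \<noteq> (0,0,0) \<and> eval3 n F (fst p) (fst (snd p)) (snd (snd p)) = 0)" for i
  define \<xi> where "\<xi> i = fst (pt i)" for i
  define \<eta> where "\<eta> i = fst (snd (pt i))" for i
  define \<zeta> where "\<zeta> i = snd (snd (pt i))" for i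
  have pts: "f i = ppow (linform (\<xi> i) (\<eta> i) (\<zeta> i)) m \<and> (\<xi> i, \<eta> i, \<zeta> i) \<noteq> (0,0,0) \<and> eval3 n F (\<xi> i) (\<eta> i) (\<zeta> i) = 0"
    if "i < r_num n m" for i
  proof -
    have "f i \<in> G" using f' that B(1) by (auto simp: bij_betw_def)
    then obtain x y z where xyz: "f i = ppow (linform x y z) m" "(x,y,z) \<noteq> (0,0,0)" "eval3 n F x y z = 0"
      unfolding G_def by blast
    have "\<exists>p. f i = ppow (linform (fst p) (fst (snd p)) (snd (snd p))) m \<and> (fst p, fst (snd p), snd (snd p)) \<noteq> (0,0,0) \<and> eval3 n F (fst p) (fst (snd p)) (snd (snd p)) = 0"
      by (rule exI[of _ "(x,y,z)"]) (simp only: fst_conv snd_conv xyz, simp)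
    hence "f i = ppow (linform (fst (pt i)) (fst (snd (pt i))) (snd (snd (pt i)))) m \<and> (fst (pt i), fst (snd (pt i)), snd (snd (pt i))) \<noteq> (0,0,0) \<and> eval3 n F (fst (pt i)) (fst (snd (pt i))) (snd (snd (pt i))) = 0"
      unfolding pt_def by (rule someI_ex)
    thus ?thesis unfolding \<xi>_def \<eta>_def \<zeta>_def .
  qed
  have eqf: "\<And>i. i \<in> {..<r_num n m} \<Longrightarrow> ppow (linform (\<xi> i) (\<eta> i) (\<zeta> i)) m = f i"
    using pts by simp
  have bij2: "bij_betw (\<lambda>i. ppow (linform (\<xi> i) (\<eta> i) (\<zeta> i)) m) {..<r_num n m} B"
    using bij_betw_cong[of "{..<r_num n m}" "\<lambda>i. ppow (linform (\<xi> i) (\<eta> i) (\<zeta> i)) m" f B] eqf f' by blast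
  hence img: "(\<lambda>i. ppow (linform (\<xi> i) (\<eta> i) (\<zeta> i)) m) ` {..<r_num n m} = B" by (simp add: bij_betw_def)
  have P1: "\<forall>i<r_num n m. (\<xi> i, \<eta> i, \<zeta> i) \<noteq> (0, 0, 0) \<and> eval3 n F (\<xi> i) (\<eta> i) (\<zeta> i) = 0"
    using pts by blast
  have P2: "inj_on (\<lambda>i. ppow (linform (\<xi> i) (\<eta> i) (\<zeta> i)) m) {..<r_num n m}"
    using bij2 by (simp add: bij_betw_def)
  have P3: "\<not> cs.dependent ((\<lambda>i. ppow (linform (\<xi> i) (\<eta> i) (\<zeta> i)) m) ` {..<r_num n m})"
    unfolding img by (rule B(2))
  have P4: "cs.span ((\<lambda>i. ppow (linform (\<xi> i) (\<eta> i) (\<zeta> i)) m) ` {..<r_num n m}) = ?S"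
    unfolding img by (rule spanB)
  have P0: "cs.dim ?S = r_num n m" using dimS rN by simp
  show ?thesis using P0 P1 P2 P3 P4 by blast
qed


end
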